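(* Let $S\subset\{1,\dots,d\}$ and let $y_{S^c}=(y_j)_{j\in S^c}$ be a vector with finite positive entries. Then there exists a unique $u_S(y_{S^c})\in V_S$ such that $$\sum_{j\in S^c} y_j\int_{\Omega_j}\nabla u_S(y_{S^c})\cdot\nabla v\,dx=\langle f,v\rangle_{H^{-1},H^1_0}\quad\text{for all } v\in V_S.$$ Moreover, $u(y_S,y_{S^c})\to u_S(y_{S^c})$ strongly in $H^1_0(\Omega)$ when $y_{S^c}$ is held fixed and $y_j\to\infty$ for all $j\in S$.
   Context: Let $\Omega\subset\mathbb R^m$ be a bounded open domain, partitioned into disjoint open subdomains $\Omega_1,\dots,\Omega_d$ whose closures cover $\overline\Omega$. Equip $H^1_0(\Omega)$ with the norm $\|v\|_{H^1_0}=\|\nabla v\|_{L^2(\Omega)}$. Let $f\in H^{-1}(\Omega)$. For $y=(y_1,\dots,y_d)\in Y:=\,]0,\infty[^d$, let $u(y)\in H^1_0(\Omega)$ be the unique solution of $$\sum_{j=1}^d y_j\int_{\Omega_j}\nabla u(y)\cdot\nabla v\,dx=\langle f,v\rangle_{H^{-1},H^1_0}\quad\text{for all } v\in H^1_0(\Omega),$$ that is, the solution of $-\mathrm{div}(a(y)\nabla u)=f$ with $u=0$ on $\partial\Omega$ and $a(y)=\sum_j y_j\chi_{\Omega_j}$. For $S\subset\{1,\dots,d\}$, set $S^c=\{1,\dots,d\}\setminus S$, write $y=(y_S,y_{S^c})$ with $y_S=(y_j)_{j\in S}$ and $y_{S^c}=(y_j)_{j\in S^c}$, and define the closed subspace $V_S:=\{v\in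 H^1_0(\Omega):\nabla v|_{\Omega_j}=0 \text{ for all } j\in S\}$. *)

theory Defs
  imports "HOL-Analysis.Analysis"
begin

definition L2 :: "('a::euclidean_space \<Rightarrow> 'b::euclidean_space) \<Rightarrow> bool" where
  "L2 f \<longleftrightarrow> f \<in> borel_measurable lebesgue \<and> integrable lebesgue (\<lambda>x. (norm (f x))\<^sup>2)"

definition L2norm :: "('a::euclidean_space \<Rightarrow> 'b::euclidean_space) \<Rightarrow> real" where
  "L2norm f = sqrt (\<integral>x. (norm (f x))\<^sup>2 \<partial>lebesgue)"

definition C1c :: "'a::euclidean_space set \<Rightarrow> ('a \<Rightarrow> real) \<Rightarrow> ('a \<Rightarrow> 'a) \<Rightarrow> bool" where
  "C1c \<Omega> \<phi> G \<longleftrightarrow> (\<forall>x. (\<phi> has_derivative (\<lambda>h. G x \<bullet> h)) (at x)) \<and> continuous_on UNIV G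
     \<and> compact (closure {x. \<phi> x \<noteq> 0}) \<and> closure {x. \<phi> x \<noteq> 0} \<subseteq> \<Omega>"

text \<open>H01 \<Omega> v g: v belongs to H^1_0(\<Omega>) (closure of C^1_c(\<Omega>) in the H^1 norm)
  and g is its weak gradient.\<close>
definition H01 :: "'a::euclidean_space set \<Rightarrow> ('a \<Rightarrow> real) \<Rightarrow> ('a \<Rightarrow> 'a) \<Rightarrow> bool" where
  "H01 \<Omega> v g \<longleftrightarrow> L2 v \<and> L2 g \<and>
     (\<exists>\<phi> G. (\<forall>n. C1c \<Omega> (\<phi> n) (G n)) \<and>
        (\<lambda>n. L2norm (\<lambda>x. \<phi> n x - v x)) \<longlonglongrightarrow> 0 \<and>
        (\<lambda>n. L2norm (\<lambda>x. G n x - g x)) \<longlonglongrightarrow> 0)"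

definition Hminus1 :: "'a::euclidean_space set \<Rightarrow> (('a \<Rightarrow> real) \<Rightarrow> real) \<Rightarrow> bool" where
  "Hminus1 \<Omega> F \<longleftrightarrow>
     (\<forall>v g w h. H01 \<Omega> v g \<longrightarrow> H01 \<Omega> w h \<longrightarrow> F (\<lambda>x. v x + w x) = F v + F w) \<and>
     (\<forall>v g c. H01 \<Omega> v g \<longrightarrow> F (\<lambda>x. c * v x) = c * F v) \<and>
     (\<exists>C. \<forall>v g. H01 \<Omega> v g \<longrightarrow> \<bar>F v\<bar> \<le> C * L2norm g)"

definition VS :: "(nat \<Rightarrow> 'a::euclidean_space set) \<Rightarrow> nat set \<Rightarrow> ('a \<Rightarrow> 'a) \<Rightarrow> bool" where
  "VS Om S g \<longleftrightarrow> (\<forall>j\<in>S. AE x in lebesgue. x \<in> Om j \<longrightarrow> g x = 0)"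

end

theory Submission
  imports Defs
begin


lemma L2_meas: "L2 f \<Longrightarrow> f \<in> borel_measurable lebesgue" by (simp add: L2_def)
lemma L2_int: "L2 f \<Longrightarrow> integrable lebesgue (\<lambda>x. (norm (f x))\<^sup>2)" by (simp add: L2_def)

lemma L2_add:
  fixes f g :: "'a::euclidean_space \<Rightarrow> 'b::euclidean_space"
  assumes "L2 f" "L2 g" shows "L2 (\<lambda>x. f x + g x)"
proof -
  have [measurable]: "f \<in> borel_measurable lebesgue" "g \<in> borel_measurable lebesgue" using assms by (auto simp: L2_def)
  have m: "(\<lambda>x. f x + g x) \<in> borel_measurable lebesgue" by measurable
  have "integrable lebesgue (\<lambda>x. 2 * (norm (f x))\<^sup>2 + 2 * (norm (g x))\<^sup>2)"
    using assms by (simp add: L2_def)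
  moreover have mm: "(\<lambda>x. (norm (f x + g x))\<^sup>2) \<in> borel_measurable lebesgue" by measurable
  moreover have "AE x in lebesgue. norm ((norm (f x + g x))\<^sup>2) \<le> norm (2 * (norm (f x))\<^sup>2 + 2 * (norm (g x))\<^sup>2)"
  proof (intro AE_I2)
    fix x
    have "norm (f x + g x) \<le> norm (f x) + norm (g x)" by (rule norm_triangle_ineq)
    hence "(norm (f x + g x))\<^sup>2 \<le> (norm (f x) + norm (g x))\<^sup>2" by (simp add: power_mono)
    also have "\<dots> \<le> 2 * (norm (f x))\<^sup>2 + 2 * (norm (g x))\<^sup>2"
    proof -
      have "(norm (f x) + norm (g x))\<^sup>2 = 2 * (norm (f x))\<^sup>2 + 2 * (norm (g x))\<^sup>2 - (norm (f x) - norm (g x))\<^sup>2"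
        by (simp add: power2_eq_square algebra_simps)
      thus ?thesis using zero_le_power2[of "norm (f x) - norm (g x)"] by linarith
    qed
    finally show "norm ((norm (f x + g x))\<^sup>2) \<le> norm (2 * (norm (f x))\<^sup>2 + 2 * (norm (g x))\<^sup>2)" by simp
  qed
  ultimately have "integrable lebesgue (\<lambda>x. (norm (f x + g x))\<^sup>2)"
    by (rule Bochner_Integration.integrable_bound)
  with m show ?thesis by (simp add: L2_def)
qed

lemma L2_scale:
  fixes f :: "'a::euclidean_space \<Rightarrow> 'b::euclidean_space"
  assumes "L2 f" shows "L2 (\<lambda>x. c *\<^sub>R f x)"
proof -
  have [measurable]: "f \<in> borel_measurable lebesgue" using assms by (auto simp: L2_def)
  have "integrable lebesgue (\<lambda>x. c\<^sup>2 * (norm (f x))\<^sup>2)" using assms by (simp add: L2_def)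
  moreover have "(\<lambda>x. c *\<^sub>R f x) \<in> borel_measurable lebesgue" by measurable
  ultimately show ?thesis by (simp add: L2_def power_mult_distrib)
qed

lemma L2_uminus:
  fixes f :: "'a::euclidean_space \<Rightarrow> 'b::euclidean_space"
  assumes "L2 f" shows "L2 (\<lambda>x. - f x)"
  using assms by (simp add: L2_def)

lemma L2_diff:
  fixes f g :: "'a::euclidean_space \<Rightarrow> 'b::euclidean_space"
  assumes "L2 f" "L2 g" shows "L2 (\<lambda>x. f x - g x)"
  using L2_add[OF assms(1) L2_uminus[OF assms(2)]] by simp

lemma L2_mult_real:
  fixes f :: "'a::euclidean_space \<Rightarrow> real"
  assumes "L2 f" shows "L2 (\<lambda>x. c * f x)"
  using L2_scale[OF assms, of c] by simp

lemma L2_zero: "L2 (\<lambda>x::'a::euclidean_space. 0::'b::euclidean_space)"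
  by (simp add: L2_def)

lemma L2_indicator:
  fixes f :: "'a::euclidean_space \<Rightarrow> 'b::euclidean_space"
  assumes "L2 f" "A \<in> sets lebesgue" shows "L2 (\<lambda>x. indicator A x *\<^sub>R f x)"
proof -
  have [measurable]: "f \<in> borel_measurable lebesgue" "A \<in> sets lebesgue" using assms by (auto simp: L2_def)
  have m: "(\<lambda>x. indicator A x *\<^sub>R f x) \<in> borel_measurable lebesgue" by measurable
  have "integrable lebesgue (\<lambda>x. (norm (f x))\<^sup>2)" using assms by (simp add: L2_def)
  moreover have "(\<lambda>x. (norm (indicator A x *\<^sub>R f x))\<^sup>2) \<in> borel_measurable lebesgue" by measurable
  moreover have "AE x in lebesgue. norm ((norm (indicator A x *\<^sub>R f x))\<^sup>2) \<le> norm ((norm (f x))\<^sup>2)"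
    by (intro AE_I2) (simp add: indicator_def)
  ultimately have "integrable lebesgue (\<lambda>x. (norm (indicator A x *\<^sub>R f x))\<^sup>2)"
    by (rule Bochner_Integration.integrable_bound)
  with m show ?thesis by (simp add: L2_def)
qed

lemma L2_inner_integrable:
  fixes f g :: "'a::euclidean_space \<Rightarrow> 'b::euclidean_space"
  assumes "L2 f" "L2 g" shows "integrable lebesgue (\<lambda>x. f x \<bullet> g x)"
proof -
  have [measurable]: "f \<in> borel_measurable lebesgue" "g \<in> borel_measurable lebesgue" using assms by (auto simp: L2_def)
  have m: "(\<lambda>x. f x \<bullet> g x) \<in> borel_measurable lebesgue" by measurable
  have "integrable lebesgue (\<lambda>x. (norm (f x))\<^sup>2 + (norm (g x))\<^sup>2)"
    using assms by (simp add: L2_def)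
  moreover note m
  moreover have "AE x in lebesgue. norm (f x \<bullet> g x) \<le> norm ((norm (f x))\<^sup>2 + (norm (g x))\<^sup>2)"
  proof (intro AE_I2)
    fix x
    have "\<bar>f x \<bullet> g x\<bar> \<le> norm (f x) * norm (g x)" by (rule Cauchy_Schwarz_ineq2)
    also have "\<dots> \<le> (norm (f x))\<^sup>2 + (norm (g x))\<^sup>2"
      by (smt (verit) norm_ge_zero power2_eq_square mult_mono sum_squares_bound)
    finally show "norm (f x \<bullet> g x) \<le> norm ((norm (f x))\<^sup>2 + (norm (g x))\<^sup>2)" by simp
  qed
  ultimately show ?thesis
    by (rule Bochner_Integration.integrable_bound)
qed

definition Q :: "('a::euclidean_space \<Rightarrow> 'b::euclidean_space) \<Rightarrow> real" where
  "Q f = (\<integral>x. (norm (f x))\<^sup>2 \<partial>lebesgue)"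

lemma Q_nonneg: "Q f \<ge> 0" unfolding Q_def by (intro integral_nonneg_AE) auto

lemma L2norm_Q: "L2norm f = sqrt (Q f)" by (simp add: L2norm_def Q_def)
lemma L2norm_nonneg: "L2norm f \<ge> 0" by (simp add: L2norm_def)
lemma L2norm_sq: "(L2norm f)\<^sup>2 = Q f" using Q_nonneg by (simp add: L2norm_Q)

lemma Q_zero_AE:
  assumes "L2 f" "Q f = 0" shows "AE x in lebesgue. f x = 0"
proof -
  have "AE x in lebesgue. (norm (f x))\<^sup>2 = 0"
    using assms integral_nonneg_eq_0_iff_AE[of lebesgue "\<lambda>x. (norm (f x))\<^sup>2"]
    by (simp add: L2_def Q_def)
  thus ?thesis by simp
qed

lemma CS_integral:
  fixes f g :: "'a::euclidean_space \<Rightarrow> 'b::euclidean_space"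
  assumes f: "L2 f" and g: "L2 g" shows "\<bar>\<integral>x. f x \<bullet> g x \<partial>lebesgue\<bar> \<le> L2norm f * L2norm g"
proof -
  let ?A = "Q f" and ?B = "Q g"
  have iA: "integrable lebesgue (\<lambda>x. (norm (f x))\<^sup>2)" and iB: "integrable lebesgue (\<lambda>x. (norm (g x))\<^sup>2)"
    using f g by (auto simp: L2_def)
  have ifg: "integrable lebesgue (\<lambda>x. f x \<bullet> g x)" by (rule L2_inner_integrable[OF f g])
  have gen: "\<bar>\<integral>x. f x \<bullet> g x \<partial>lebesgue\<bar> \<le> (t * ?A + ?B / t) / 2" if t: "t > 0" for t
  proof -
    have pw: "\<bar>f x \<bullet> g x\<bar> \<le> (t * (norm (f x))\<^sup>2 + (norm (g x))\<^sup>2 / t) / 2" for x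
    proof -
      have "0 \<le> (t * norm (f x) - norm (g x))\<^sup>2 / t" using t by simp
      also have "\<dots> = t * (norm (f x))\<^sup>2 - 2 * (norm (f x) * norm (g x)) + (norm (g x))\<^sup>2 / t"
        using t by (simp add: power2_eq_square field_simps)
      finally have "norm (f x) * norm (g x) \<le> (t * (norm (f x))\<^sup>2 + (norm (g x))\<^sup>2 / t) / 2" by simp
      moreover have "\<bar>f x \<bullet> g x\<bar> \<le> norm (f x) * norm (g x)" by (rule Cauchy_Schwarz_ineq2)
      ultimately show ?thesis by linarith
    qed
    have "\<bar>\<integral>x. f x \<bullet> g x \<partial>lebesgue\<bar> \<le> (\<integral>x. \<bar>f x \<bullet> g x\<bar> \<partial>lebesgue)"
      by (rule integral_abs_bound)
    also have "\<dots> \<le> (\<integral>x. (t * (norm (f x))\<^sup>2 + (norm (g x))\<^sup>2 / t) / 2 \<partial>lebesgue)"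
      using pw iA iB ifg by (intro integral_mono) auto
    also have "\<dots> = (t * ?A + ?B / t) / 2"
      using iA iB by (simp add: Q_def)
    finally show ?thesis .
  qed
  show ?thesis
  proof (cases "?A = 0 \<or> ?B = 0")
    case True
    hence "AE x in lebesgue. f x \<bullet> g x = 0"
      using Q_zero_AE[OF f] Q_zero_AE[OF g] by (auto elim: AE_mp)
    hence "(\<integral>x. f x \<bullet> g x \<partial>lebesgue) = 0" by (rule integral_eq_zero_AE)
    thus ?thesis by (simp add: L2norm_nonneg)
  next
    case False
    hence A: "?A > 0" and B: "?B > 0" using Q_nonneg[of f] Q_nonneg[of g] by auto
    define t where "t = sqrt ?B / sqrt ?A"
    have t: "t > 0" using A B by (simp add: t_def)
    have "(t * ?A + ?B / t) / 2 = sqrt ?A * sqrt ?B"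
      using A B unfolding t_def
      by (simp add: field_simps)
    with gen[OF t] show ?thesis by (simp add: L2norm_Q)
  qed
qed



lemma Q_add_eq:
  fixes f g :: "'a::euclidean_space \<Rightarrow> 'b::euclidean_space"
  assumes f: "L2 f" and g: "L2 g"
  shows "Q (\<lambda>x. f x + g x) = Q f + 2 * (\<integral>x. f x \<bullet> g x \<partial>lebesgue) + Q g"
proof -
  have "Q (\<lambda>x. f x + g x) = (\<integral>x. (norm (f x))\<^sup>2 + 2 * (f x \<bullet> g x) + (norm (g x))\<^sup>2 \<partial>lebesgue)"
    unfolding Q_def by (intro Bochner_Integration.integral_cong refl)
      (simp add: power2_norm_eq_inner inner_add inner_commute)
  also have "\<dots> = Q f + 2 * (\<integral>x. f x \<bullet> g x \<partial>lebesgue) + Q g"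
    using L2_int[OF f] L2_int[OF g] L2_inner_integrable[OF f g] by (simp add: Q_def)
  finally show ?thesis .
qed

lemma L2norm_triangle:
  fixes f g :: "'a::euclidean_space \<Rightarrow> 'b::euclidean_space"
  assumes f: "L2 f" and g: "L2 g"
  shows "L2norm (\<lambda>x. f x + g x) \<le> L2norm f + L2norm g"
proof -
  have "Q (\<lambda>x. f x + g x) \<le> Q f + 2 * (L2norm f * L2norm g) + Q g"
    using Q_add_eq[OF f g] CS_integral[OF f g] by linarith
  also have "\<dots> = (L2norm f + L2norm g)\<^sup>2" by (simp add: power2_sum L2norm_sq)
  finally have "sqrt (Q (\<lambda>x. f x + g x)) \<le> sqrt ((L2norm f + L2norm g)\<^sup>2)" by (rule real_sqrt_le_mono)
  moreover have "L2norm f + L2norm g \<ge> 0" using L2norm_nonneg[of f] L2norm_nonneg[of g] by simp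
  ultimately show ?thesis by (simp only: L2norm_Q[symmetric] real_sqrt_abs abs_of_nonneg)
qed

lemma L2norm_scale: "L2norm (\<lambda>x. c *\<^sub>R f x) = \<bar>c\<bar> * L2norm f"
proof -
  have "(\<integral>x. (norm (c *\<^sub>R f x))\<^sup>2 \<partial>lebesgue) = c\<^sup>2 * (\<integral>x. (norm (f x))\<^sup>2 \<partial>lebesgue)"
    by (simp add: power_mult_distrib)
  thus ?thesis by (simp add: L2norm_def real_sqrt_mult)
qed

lemma L2norm_minus_commute: "L2norm (\<lambda>x. f x - g x) = L2norm (\<lambda>x. g x - f x)"
  by (simp add: L2norm_def norm_minus_commute)

lemma L2norm_uminus: "L2norm (\<lambda>x. - f x) = L2norm f"
  by (simp add: L2norm_def)

lemma L2norm_diff_triangle: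
  fixes f g h :: "'a::euclidean_space \<Rightarrow> 'b::euclidean_space"
  assumes f: "L2 f" and g: "L2 g" and h: "L2 h"
  shows "L2norm (\<lambda>x. f x - h x) \<le> L2norm (\<lambda>x. f x - g x) + L2norm (\<lambda>x. g x - h x)"
  using L2norm_triangle[OF L2_diff[OF f g] L2_diff[OF g h]] by simp

lemma L2norm_indicator_le:
  fixes f :: "'a::euclidean_space \<Rightarrow> 'b::euclidean_space"
  assumes f: "L2 f" and A: "A \<in> sets lebesgue"
  shows "L2norm (\<lambda>x. indicator A x *\<^sub>R f x) \<le> L2norm f"
proof -
  have "Q (\<lambda>x. indicator A x *\<^sub>R f x) \<le> Q f"
    unfolding Q_def using L2_int[OF f] L2_int[OF L2_indicator[OF f A]]
    by (intro integral_mono) (auto simp: indicator_def)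
  thus ?thesis by (simp add: L2norm_Q)
qed

lemma set_CS:
  fixes f g :: "'a::euclidean_space \<Rightarrow> 'b::euclidean_space"
  assumes f: "L2 f" and g: "L2 g" and A: "A \<in> sets lebesgue"
  shows "\<bar>LINT x:A|lebesgue. f x \<bullet> g x\<bar> \<le> L2norm f * L2norm g"
proof -
  have "(LINT x:A|lebesgue. f x \<bullet> g x) = (\<integral>x. (indicator A x *\<^sub>R f x) \<bullet> g x \<partial>lebesgue)"
    by (simp add: set_lebesgue_integral_def)
  also have "\<bar>\<dots>\<bar> \<le> L2norm (\<lambda>x. indicator A x *\<^sub>R f x) * L2norm g"
    by (rule CS_integral[OF L2_indicator[OF f A] g])
  also have "\<dots> \<le> L2norm f * L2norm g"
    by (intro mult_right_mono L2norm_indicator_le f A L2norm_nonneg)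
  finally show ?thesis .
qed

lemma set_Q_nonneg: "(LINT x:A|lebesgue. (f x::'b::euclidean_space) \<bullet> f x) \<ge> 0"
  unfolding set_lebesgue_integral_def by (intro integral_nonneg_AE) (auto simp: indicator_def)

lemma set_Q_le:
  fixes f :: "'a::euclidean_space \<Rightarrow> 'b::euclidean_space"
  assumes f: "L2 f" and A: "A \<in> sets lebesgue"
  shows "(LINT x:A|lebesgue. f x \<bullet> f x) \<le> Q f"
proof -
  have "(LINT x:A|lebesgue. f x \<bullet> f x) = (\<integral>x. indicator A x * (norm (f x))\<^sup>2 \<partial>lebesgue)"
    by (simp add: set_lebesgue_integral_def power2_norm_eq_inner)
  also have "\<dots> \<le> Q f" unfolding Q_def
    using L2_int[OF f] integrable_mult_indicator[OF A L2_int[OF f]] by (intro integral_mono) (auto simp: indicator_def)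
  finally show ?thesis .
qed



lemma L2_from_nn:
  fixes h :: "'a::euclidean_space \<Rightarrow> 'b::euclidean_space"
  assumes m: "h \<in> borel_measurable lebesgue"
    and b: "(\<integral>\<^sup>+x. ennreal ((norm (h x))\<^sup>2) \<partial>lebesgue) \<le> ennreal c" and c: "c \<ge> 0"
  shows "L2 h \<and> Q h \<le> c"
proof -
  have [measurable]: "h \<in> borel_measurable lebesgue" by (rule m)
  have i: "integrable lebesgue (\<lambda>x. (norm (h x))\<^sup>2)"
    by (rule integrableI_bounded) (use b in \<open>auto simp: top_unique intro: le_less_trans\<close>)
  have "ennreal (Q h) = (\<integral>\<^sup>+x. ennreal ((norm (h x))\<^sup>2) \<partial>lebesgue)"
    unfolding Q_def by (rule nn_integral_eq_integral[OF i, symmetric]) auto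
  also note b
  finally have "ennreal (Q h) \<le> ennreal c" .
  hence "Q h \<le> c" using c by (simp add: ennreal_le_iff)
  with i m show ?thesis by (simp add: L2_def)
qed

lemma nn_Q:
  fixes h :: "'a::euclidean_space \<Rightarrow> 'b::euclidean_space"
  assumes "L2 h"
  shows "(\<integral>\<^sup>+x. ennreal ((norm (h x))\<^sup>2) \<partial>lebesgue) = ennreal (Q h)"
  unfolding Q_def by (rule nn_integral_eq_integral[OF L2_int[OF assms]]) auto

lemma L2_complete:
  fixes f :: "nat \<Rightarrow> 'a::euclidean_space \<Rightarrow> 'b::euclidean_space"
  assumes L: "\<And>n. L2 (f n)"
    and C: "\<And>e. e > 0 \<Longrightarrow> \<exists>N. \<forall>m\<ge>N. \<forall>n\<ge>N. L2norm (\<lambda>x. f m x - f n x) < e"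
  shows "\<exists>g. L2 g \<and> (\<lambda>n. L2norm (\<lambda>x. f n x - g x)) \<longlonglongrightarrow> 0"
proof -
  have [measurable]: "\<And>n. f n \<in> borel_measurable lebesgue" using L by (simp add: L2_def)
  have "\<exists>r. \<forall>n. (\<forall>i\<ge>r n. \<forall>j\<ge>r n. L2norm (\<lambda>x. f i x - f j x) < (1/4)^n) \<and> r n < r (Suc n)"
  proof (intro dependent_nat_choice)
    show "\<exists>x. \<forall>i\<ge>x. \<forall>j\<ge>x. L2norm (\<lambda>x. f i x - f j x) < (1/4)^0" using C[of 1] by auto
  next
    fix x n assume "\<forall>i\<ge>x. \<forall>j\<ge>x. L2norm (\<lambda>x. f i x - f j x) < (1/4)^n"
    obtain N where N: "\<forall>i\<ge>N. \<forall>j\<ge>N. L2norm (\<lambda>x. f i x - f j x) < (1/4)^Suc n"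
      using C[of "(1/4)^Suc n"] by auto
    show "\<exists>y. (\<forall>i\<ge>y. \<forall>j\<ge>y. L2norm (\<lambda>x. f i x - f j x) < (1/4)^Suc n) \<and> x < y"
      by (rule exI[of _ "max N (Suc x)"]) (use N in auto)
  qed
  then obtain r where r: "\<And>n i j. i \<ge> r n \<Longrightarrow> j \<ge> r n \<Longrightarrow> L2norm (\<lambda>x. f i x - f j x) < (1/4)^n"
    and rs: "\<And>n. r n < r (Suc n)" by blast
  have smono: "strict_mono r" using rs by (simp add: strict_mono_Suc_iff)
  define D where "D k x = f (r (Suc k)) x - f (r k) x" for k x
  have LD: "L2 (D k)" for k unfolding D_def by (intro L2_diff L)
  have [measurable]: "D k \<in> borel_measurable lebesgue" for k using LD[of k] by (simp add: L2_def)
  have QD: "2^k * Q (D k) \<le> (1/8)^k" for k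
  proof -
    have "L2norm (D k) < (1/4)^k" unfolding D_def using rs[of k] by (intro r) auto
    hence "(L2norm (D k))\<^sup>2 \<le> ((1/4)^k)\<^sup>2" using L2norm_nonneg by (intro power_mono) auto
    moreover have "((1/4::real)^k)\<^sup>2 = (1/16)^k" by (simp add: power2_eq_square power_mult_distrib[symmetric])
    ultimately have "Q (D k) \<le> (1/16)^k" by (simp add: L2norm_sq)
    hence "2^k * Q (D k) \<le> 2^k * (1/16)^k" by simp
    also have "\<dots> = (2 * (1/16))^k" by (simp only: power_mult_distrib)
    also have "\<dots> = (1/8)^k" by simp
    finally show ?thesis .
  qed
  define s where "s x = (\<Sum>k. ennreal (2^k * (norm (D k x))\<^sup>2))" for x
  have "(\<integral>\<^sup>+x. s x \<partial>lebesgue) = (\<Sum>k. \<integral>\<^sup>+x. ennreal (2^k * (norm (D k x))\<^sup>2) \<partial>lebesgue)"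
    unfolding s_def by (rule nn_integral_suminf) measurable
  also have "\<dots> = (\<Sum>k. ennreal (2^k * Q (D k)))"
  proof (intro suminf_cong)
    fix k
    have "(\<integral>\<^sup>+x. ennreal (2^k * (norm (D k x))\<^sup>2) \<partial>lebesgue) = (\<integral>\<^sup>+x. ennreal (2^k) * ennreal ((norm (D k x))\<^sup>2) \<partial>lebesgue)"
      by (simp add: ennreal_mult)
    also have "\<dots> = ennreal (2^k) * (\<integral>\<^sup>+x. ennreal ((norm (D k x))\<^sup>2) \<partial>lebesgue)"
      by (rule nn_integral_cmult) measurable
    also have "\<dots> = ennreal (2^k * Q (D k))" using nn_Q[OF LD] Q_nonneg[of "D k"] by (simp add: ennreal_mult)
    finally show "(\<integral>\<^sup>+x. ennreal (2^k * (norm (D k x))\<^sup>2) \<partial>lebesgue) = ennreal (2^k * Q (D k))" .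
  qed
  also have "\<dots> \<le> (\<Sum>k. ennreal ((1/8)^k))"
    by (intro suminf_le summableI) (use QD in \<open>auto intro: ennreal_leI\<close>)
  also have "\<dots> = ennreal (\<Sum>k. (1/8::real)^k)"
    by (intro suminf_ennreal2 summable_geometric) auto
  finally have "(\<integral>\<^sup>+x. s x \<partial>lebesgue) < \<infinity>" by (simp add: le_less_trans)
  hence "AE x in lebesgue. s x < \<infinity>"
    by (intro finite_nn_integral_imp_ae_finite) (auto simp: s_def)
  hence conv: "AE x in lebesgue. convergent (\<lambda>k. f (r k) x)"
  proof (rule AE_mp, intro AE_I2 impI)
    fix x assume "s x < \<infinity>"
    hence sm: "summable (\<lambda>k. 2^k * (norm (D k x))\<^sup>2)"
      by (intro summable_suminf_not_top) (auto simp: s_def)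
    have sg: "summable (\<lambda>k. ((2^k * (norm (D k x))\<^sup>2) + (1/2)^k) / 2)"
      by (intro summable_divide summable_add sm summable_geometric) auto
    have bnd: "norm (norm (D k x)) \<le> ((2^k * (norm (D k x))\<^sup>2) + (1/2)^k) / 2" for k
    proof -
      define t :: real where "t = 2^k"
      have t: "t > 0" by (simp add: t_def)
      have "0 \<le> (t * norm (D k x) - 1)\<^sup>2 / t" using t by simp
      also have "\<dots> = t * (norm (D k x))\<^sup>2 - 2 * norm (D k x) + 1 / t"
        using t by (simp add: power2_eq_square field_simps)
      finally show ?thesis by (simp add: t_def power_one_over)
    qed
    have "summable (\<lambda>k. norm (D k x))" using summable_comparison_test'[OF sg, of 0 "\<lambda>k. norm (D k x)"] bnd by blast
    hence "summable (\<lambda>k. D k x)" by (rule summable_norm_cancel)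
    hence "(\<lambda>n. \<Sum>k<n. D k x) \<longlonglongrightarrow> (\<Sum>k. D k x)" by (rule summable_LIMSEQ)
    hence "(\<lambda>n. (\<Sum>k<n. D k x) + f (r 0) x) \<longlonglongrightarrow> (\<Sum>k. D k x) + f (r 0) x"
      by (intro tendsto_add tendsto_const)
    moreover have "(\<Sum>k<n. D k x) + f (r 0) x = f (r n) x" for n
      unfolding D_def by (simp add: sum_lessThan_telescope[of "\<lambda>k. f (r k) x"])
    ultimately show "convergent (\<lambda>k. f (r k) x)" by (auto simp: convergent_def)
  qed
  define g where "g x = lim (\<lambda>k. f (r k) x)" for x
  have gm[measurable]: "g \<in> borel_measurable lebesgue"
    unfolding g_def by (rule borel_measurable_lim_metric) measurable
  have gl: "AE x in lebesgue. (\<lambda>k. f (r k) x) \<longlonglongrightarrow> g x"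
    using conv by eventually_elim (simp add: g_def convergent_LIMSEQ_iff)
  have main: "L2 (\<lambda>x. f n x - g x) \<and> Q (\<lambda>x. f n x - g x) \<le> e\<^sup>2"
    if e: "e > 0" and N: "\<forall>m\<ge>N. \<forall>n\<ge>N. L2norm (\<lambda>x. f m x - f n x) < e" and n: "n \<ge> N" for e N n
  proof (rule L2_from_nn)
    show "(\<lambda>x. f n x - g x) \<in> borel_measurable lebesgue" by measurable
    show "e\<^sup>2 \<ge> 0" by simp
    have "(\<integral>\<^sup>+x. ennreal ((norm (f n x - g x))\<^sup>2) \<partial>lebesgue)
        = (\<integral>\<^sup>+x. liminf (\<lambda>k. ennreal ((norm (f n x - f (r k) x))\<^sup>2)) \<partial>lebesgue)"
    proof (rule nn_integral_cong_AE)
      show "AE x in lebesgue. ennreal ((norm (f n x - g x))\<^sup>2) = liminf (\<lambda>k. ennreal ((norm (f n x - f (r k) x))\<^sup>2))"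
        using gl
      proof eventually_elim
        case (elim x)
        have "(\<lambda>k. ennreal ((norm (f n x - f (r k) x))\<^sup>2)) \<longlonglongrightarrow> ennreal ((norm (f n x - g x))\<^sup>2)"
          by (intro tendsto_ennrealI tendsto_power tendsto_norm tendsto_diff tendsto_const elim)
        thus ?case by (metis lim_imp_Liminf trivial_limit_sequentially)
      qed
    qed
    also have "\<dots> \<le> liminf (\<lambda>k. \<integral>\<^sup>+x. ennreal ((norm (f n x - f (r k) x))\<^sup>2) \<partial>lebesgue)"
      by (rule nn_integral_liminf) measurable
    also have "\<dots> \<le> ennreal (e\<^sup>2)"
    proof -
      have ev: "eventually (\<lambda>k. (\<integral>\<^sup>+x. ennreal ((norm (f n x - f (r k) x))\<^sup>2) \<partial>lebesgue) \<le> ennreal (e\<^sup>2)) sequentially"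
      proof (rule eventually_sequentiallyI[of N])
        fix k assume k: "k \<ge> N"
        have "r k \<ge> k" using smono by (rule strict_mono_imp_increasing)
        hence "L2norm (\<lambda>x. f n x - f (r k) x) < e" using N n k by auto
        hence "(L2norm (\<lambda>x. f n x - f (r k) x))\<^sup>2 \<le> e\<^sup>2"
          using L2norm_nonneg by (intro power_mono) auto
        hence "Q (\<lambda>x. f n x - f (r k) x) \<le> e\<^sup>2" by (simp add: L2norm_sq)
        thus "(\<integral>\<^sup>+x. ennreal ((norm (f n x - f (r k) x))\<^sup>2) \<partial>lebesgue) \<le> ennreal (e\<^sup>2)"
          using nn_Q[OF L2_diff[OF L L]] by (simp add: ennreal_leI)
      qed
      have "liminf (\<lambda>k. \<integral>\<^sup>+x. ennreal ((norm (f n x - f (r k) x))\<^sup>2) \<partial>lebesgue)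
          \<le> limsup (\<lambda>k. \<integral>\<^sup>+x. ennreal ((norm (f n x - f (r k) x))\<^sup>2) \<partial>lebesgue)"
        by (rule Liminf_le_Limsup) simp
      also have "\<dots> \<le> ennreal (e\<^sup>2)" by (rule Limsup_bounded[OF ev])
      finally show ?thesis .
    qed
    finally show "(\<integral>\<^sup>+x. ennreal ((norm (f n x - g x))\<^sup>2) \<partial>lebesgue) \<le> ennreal (e\<^sup>2)" .
  qed
  obtain N1 where N1: "\<forall>m\<ge>N1. \<forall>n\<ge>N1. L2norm (\<lambda>x. f m x - f n x) < 1" using C[of 1] by auto
  have "L2 (\<lambda>x. f N1 x - g x)" using main[OF _ N1] by auto
  hence Lg: "L2 g" using L2_diff[OF L[of N1] \<open>L2 (\<lambda>x. f N1 x - g x)\<close>] by simp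
  have "(\<lambda>n. L2norm (\<lambda>x. f n x - g x)) \<longlonglongrightarrow> 0"
  proof (rule LIMSEQ_I)
    fix e :: real assume e: "e > 0"
    obtain N where N: "\<forall>m\<ge>N. \<forall>n\<ge>N. L2norm (\<lambda>x. f m x - f n x) < e/2" using C[of "e/2"] e by auto
    show "\<exists>no. \<forall>n\<ge>no. norm (L2norm (\<lambda>x. f n x - g x) - 0) < e"
    proof (intro exI allI impI)
      fix n assume n: "n \<ge> N"
      have "Q (\<lambda>x. f n x - g x) \<le> (e/2)\<^sup>2" using main[OF _ N n] e by auto
      hence "sqrt (Q (\<lambda>x. f n x - g x)) \<le> sqrt ((e/2)\<^sup>2)" by (rule real_sqrt_le_mono)
      hence "L2norm (\<lambda>x. f n x - g x) \<le> e/2" using e by (simp add: L2norm_Q)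
      thus "norm (L2norm (\<lambda>x. f n x - g x) - 0) < e" using e L2norm_nonneg[of "\<lambda>x. f n x - g x"] by simp
    qed
  qed
  with Lg show ?thesis by blast
qed



lemma cont_meas_lebesgue:
  fixes f :: "'a::euclidean_space \<Rightarrow> 'b::euclidean_space"
  assumes "continuous_on UNIV f" shows "f \<in> borel_measurable lebesgue"
proof -
  have "f \<in> borel_measurable borel" by (rule borel_measurable_continuous_onI[OF assms])
  hence "f \<in> borel_measurable lborel" by simp
  thus ?thesis by (rule measurable_completion)
qed

lemma integrable_lborel_lebesgue:
  fixes f :: "'a::euclidean_space \<Rightarrow> 'b::euclidean_space"
  assumes "integrable lborel f" shows "integrable lebesgue f"
  using assms integrable_completion[of f lborel] by simp

lemma C1c_zero_outside:
  assumes "C1c \<Omega> \<phi> G" "x \<notin> closure {x. \<phi> x \<noteq> 0}"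
  shows "G x = 0" "\<phi> x = 0"
proof -
  let ?U = "- closure {x. \<phi> x \<noteq> 0}"
  have U: "open ?U" "x \<in> ?U" using assms by auto
  have z: "\<phi> y = 0" if y: "y \<in> ?U" for y
  proof (rule ccontr)
    assume "\<phi> y \<noteq> 0"
    hence "y \<in> closure {x. \<phi> x \<noteq> 0}" using closure_subset[of "{x. \<phi> x \<noteq> 0}"] by auto
    with y show False by simp
  qed
  show "\<phi> x = 0" using U(2) by (rule z)
  have d: "(\<phi> has_derivative (\<lambda>h. G x \<bullet> h)) (at x)" using assms by (simp add: C1c_def)
  have "((\<lambda>_. 0::real) has_derivative (\<lambda>h. G x \<bullet> h)) (at x)"
    by (rule has_derivative_transform_within_open[OF d U]) (erule z)
  moreover have "((\<lambda>_. 0::real) has_derivative (\<lambda>h. 0)) (at x)" by simp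
  ultimately have "(\<lambda>h. G x \<bullet> h) = (\<lambda>h. 0)" by (rule has_derivative_unique)
  hence "(\<lambda>h. G x \<bullet> h) (G x) = (\<lambda>h. 0::real) (G x)" by (rule fun_cong)
  hence "G x \<bullet> G x = 0" by simp
  thus "G x = 0" by simp
qed

lemma C1c_cont:
  assumes "C1c \<Omega> \<phi> G" shows "continuous_on UNIV \<phi>" "continuous_on UNIV G"
proof -
  have d: "(\<phi> has_derivative (\<lambda>h. G x \<bullet> h)) (at x)" for x using assms by (simp add: C1c_def)
  have "isCont \<phi> x" for x by (rule has_derivative_continuous[OF d])
  thus "continuous_on UNIV \<phi>" by (simp add: continuous_on_eq_continuous_at)
  show "continuous_on UNIV G" using assms by (simp add: C1c_def)
qed

lemma L2_cont_compact:
  fixes f :: "'a::euclidean_space \<Rightarrow> 'b::euclidean_space"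
  assumes c: "continuous_on UNIV f" and K: "compact K" and z: "\<And>x. x \<notin> K \<Longrightarrow> f x = 0"
  shows "L2 f"
proof -
  have m: "f \<in> borel_measurable lebesgue" by (rule cont_meas_lebesgue[OF c])
  have c2: "continuous_on K (\<lambda>x. (norm (f x))\<^sup>2)"
  proof (rule continuous_on_subset[of UNIV])
    show "continuous_on UNIV (\<lambda>x. (norm (f x))\<^sup>2)" using c by (intro continuous_intros)
  qed simp
  have "integrable lborel (\<lambda>x. indicator K x *\<^sub>R (norm (f x))\<^sup>2)"
    by (rule borel_integrable_compact[OF K c2])
  moreover have "(\<lambda>x. indicator K x *\<^sub>R (norm (f x))\<^sup>2) = (\<lambda>x. (norm (f x))\<^sup>2)"
    using z by (intro ext) (auto simp: indicator_def)
  ultimately have "integrable lborel (\<lambda>x. (norm (f x))\<^sup>2)" by simp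
  hence "integrable lebesgue (\<lambda>x. (norm (f x))\<^sup>2)" by (rule integrable_lborel_lebesgue)
  with m show ?thesis by (simp add: L2_def)
qed

lemma C1c_L2:
  assumes "C1c \<Omega> \<phi> G" shows "L2 \<phi>" "L2 G"
proof -
  have K: "compact (closure {x. \<phi> x \<noteq> 0})" using assms by (simp add: C1c_def)
  show "L2 \<phi>" by (rule L2_cont_compact[OF C1c_cont(1)[OF assms] K]) (erule C1c_zero_outside[OF assms])
  show "L2 G" by (rule L2_cont_compact[OF C1c_cont(2)[OF assms] K]) (erule C1c_zero_outside[OF assms])
qed

lemma compact_closed_subset':
  fixes T :: "'a::euclidean_space set"
  assumes "compact K" "closed T" "T \<subseteq> K" shows "compact T"
proof -
  have "compact (K \<inter> T)" using assms by (intro compact_Int_closed)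
  moreover have "K \<inter> T = T" using assms by auto
  ultimately show ?thesis by simp
qed

lemma C1c_lin:
  assumes A: "C1c \<Omega> \<phi>1 G1" and B: "C1c \<Omega> \<phi>2 G2"
  shows "C1c \<Omega> (\<lambda>x. a * \<phi>1 x + b * \<phi>2 x) (\<lambda>x. a *\<^sub>R G1 x + b *\<^sub>R G2 x)"
proof -
  let ?K1 = "closure {x. \<phi>1 x \<noteq> 0}" and ?K2 = "closure {x. \<phi>2 x \<noteq> 0}"
  have d: "((\<lambda>x. a * \<phi>1 x + b * \<phi>2 x) has_derivative (\<lambda>h. (a *\<^sub>R G1 x + b *\<^sub>R G2 x) \<bullet> h)) (at x)" for x
  proof -
    have d1: "(\<phi>1 has_derivative (\<lambda>h. G1 x \<bullet> h)) (at x)" using A by (simp add: C1c_def)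
    have d2: "(\<phi>2 has_derivative (\<lambda>h. G2 x \<bullet> h)) (at x)" using B by (simp add: C1c_def)
    have "((\<lambda>x. a * \<phi>1 x + b * \<phi>2 x) has_derivative (\<lambda>h. a * (G1 x \<bullet> h) + b * (G2 x \<bullet> h))) (at x)"
      by (intro has_derivative_add has_derivative_mult_right d1 d2)
    thus ?thesis by (simp add: inner_add_left algebra_simps)
  qed
  have sub: "closure {x. a * \<phi>1 x + b * \<phi>2 x \<noteq> 0} \<subseteq> ?K1 \<union> ?K2"
  proof (rule closure_minimal)
    show "{x. a * \<phi>1 x + b * \<phi>2 x \<noteq> 0} \<subseteq> ?K1 \<union> ?K2"
    proof
      fix x assume "x \<in> {x. a * \<phi>1 x + b * \<phi>2 x \<noteq> 0}"
      hence "\<phi>1 x \<noteq> 0 \<or> \<phi>2 x \<noteq> 0" by auto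
      thus "x \<in> ?K1 \<union> ?K2" using closure_subset[of "{x. \<phi>1 x \<noteq> 0}"] closure_subset[of "{x. \<phi>2 x \<noteq> 0}"] by blast
    qed
    show "closed (?K1 \<union> ?K2)" by (intro closed_Un closed_closure)
  qed
  have "compact (?K1 \<union> ?K2)" using A B by (simp add: C1c_def compact_Un)
  hence "compact (closure {x. a * \<phi>1 x + b * \<phi>2 x \<noteq> 0})"
    using closed_closure sub by (rule compact_closed_subset')
  moreover have "?K1 \<union> ?K2 \<subseteq> \<Omega>" using A B by (simp add: C1c_def)
  moreover have "continuous_on UNIV (\<lambda>x. a *\<^sub>R G1 x + b *\<^sub>R G2 x)"
    using C1c_cont(2)[OF A] C1c_cont(2)[OF B] by (intro continuous_intros)
  ultimately show ?thesis unfolding C1c_def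
    apply (intro conjI allI d)
    apply assumption
    apply assumption
    using sub apply (rule order_trans)
    apply assumption
    done
qed



lemma H01_L2: assumes "H01 \<Omega> v g" shows "L2 v" "L2 g"
  using assms by (auto simp: H01_def)

lemma squeeze0:
  fixes X Y :: "nat \<Rightarrow> real"
  assumes "\<And>n. 0 \<le> X n" "\<And>n. X n \<le> Y n" "Y \<longlonglongrightarrow> 0" shows "X \<longlonglongrightarrow> 0"
  by (rule tendsto_sandwich[of "\<lambda>_. 0" X sequentially Y]) (use assms in auto)

lemma lin_bound:
  fixes f1 f2 :: "'a::euclidean_space \<Rightarrow> 'b::euclidean_space"
  assumes "L2 f1" "L2 f2"
  shows "L2norm (\<lambda>x. a *\<^sub>R f1 x + b *\<^sub>R f2 x) \<le> \<bar>a\<bar> * L2norm f1 + \<bar>b\<bar> * L2norm f2"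
proof -
  have "L2norm (\<lambda>x. a *\<^sub>R f1 x + b *\<^sub>R f2 x) \<le> L2norm (\<lambda>x. a *\<^sub>R f1 x) + L2norm (\<lambda>x. b *\<^sub>R f2 x)"
    by (intro L2norm_triangle L2_scale assms)
  thus ?thesis by (simp add: L2norm_scale)
qed

lemma H01_lin:
  assumes A: "H01 \<Omega> v g" and B: "H01 \<Omega> w h"
  shows "H01 \<Omega> (\<lambda>x. a * v x + b * w x) (\<lambda>x. a *\<^sub>R g x + b *\<^sub>R h x)"
proof -
  obtain \<phi>1 G1 where 1: "\<And>n. C1c \<Omega> (\<phi>1 n) (G1 n)" "(\<lambda>n. L2norm (\<lambda>x. \<phi>1 n x - v x)) \<longlonglongrightarrow> 0"
    "(\<lambda>n. L2norm (\<lambda>x. G1 n x - g x)) \<longlonglongrightarrow> 0" using A by (auto simp: H01_def)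
  obtain \<phi>2 G2 where 2: "\<And>n. C1c \<Omega> (\<phi>2 n) (G2 n)" "(\<lambda>n. L2norm (\<lambda>x. \<phi>2 n x - w x)) \<longlonglongrightarrow> 0"
    "(\<lambda>n. L2norm (\<lambda>x. G2 n x - h x)) \<longlonglongrightarrow> 0" using B by (auto simp: H01_def)
  have Lv: "L2 v" "L2 g" using A by (auto simp: H01_def)
  have Lw: "L2 w" "L2 h" using B by (auto simp: H01_def)
  define \<phi> where "\<phi> n x = a * \<phi>1 n x + b * \<phi>2 n x" for n x
  define G where "G n x = a *\<^sub>R G1 n x + b *\<^sub>R G2 n x" for n x
  have C: "C1c \<Omega> (\<phi> n) (G n)" for n unfolding \<phi>_def G_def by (intro C1c_lin 1 2)
  have t1: "(\<lambda>n. L2norm (\<lambda>x. \<phi> n x - (a * v x + b * w x))) \<longlonglongrightarrow> 0"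
  proof (rule squeeze0[OF L2norm_nonneg])
    fix n
    have "(\<lambda>x. \<phi> n x - (a * v x + b * w x)) = (\<lambda>x. a *\<^sub>R (\<phi>1 n x - v x) + b *\<^sub>R (\<phi>2 n x - w x))"
      by (simp add: \<phi>_def algebra_simps)
    hence "L2norm (\<lambda>x. \<phi> n x - (a * v x + b * w x)) = L2norm (\<lambda>x. a *\<^sub>R (\<phi>1 n x - v x) + b *\<^sub>R (\<phi>2 n x - w x))"
      by simp
    also have "\<dots> \<le> \<bar>a\<bar> * L2norm (\<lambda>x. \<phi>1 n x - v x) + \<bar>b\<bar> * L2norm (\<lambda>x. \<phi>2 n x - w x)"
      by (intro lin_bound L2_diff Lv Lw C1c_L2(1)[OF 1(1)] C1c_L2(1)[OF 2(1)])
    finally show "L2norm (\<lambda>x. \<phi> n x - (a * v x + b * w x)) \<le> \<bar>a\<bar> * L2norm (\<lambda>x. \<phi>1 n x - v x) + \<bar>b\<bar> * L2norm (\<lambda>x. \<phi>2 n x - w x)" .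
  next
    show "(\<lambda>n. \<bar>a\<bar> * L2norm (\<lambda>x. \<phi>1 n x - v x) + \<bar>b\<bar> * L2norm (\<lambda>x. \<phi>2 n x - w x)) \<longlonglongrightarrow> 0"
      using tendsto_add[OF tendsto_mult[OF tendsto_const 1(2)] tendsto_mult[OF tendsto_const 2(2)]] by simp
  qed
  have t2: "(\<lambda>n. L2norm (\<lambda>x. G n x - (a *\<^sub>R g x + b *\<^sub>R h x))) \<longlonglongrightarrow> 0"
  proof (rule squeeze0[OF L2norm_nonneg])
    fix n
    have "(\<lambda>x. G n x - (a *\<^sub>R g x + b *\<^sub>R h x)) = (\<lambda>x. a *\<^sub>R (G1 n x - g x) + b *\<^sub>R (G2 n x - h x))"
      by (simp add: G_def algebra_simps)
    hence "L2norm (\<lambda>x. G n x - (a *\<^sub>R g x + b *\<^sub>R h x)) = L2norm (\<lambda>x. a *\<^sub>R (G1 n x - g x) + b *\<^sub>R (G2 n x - h x))"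
      by simp
    also have "\<dots> \<le> \<bar>a\<bar> * L2norm (\<lambda>x. G1 n x - g x) + \<bar>b\<bar> * L2norm (\<lambda>x. G2 n x - h x)"
      by (intro lin_bound L2_diff Lv Lw C1c_L2(2)[OF 1(1)] C1c_L2(2)[OF 2(1)])
    finally show "L2norm (\<lambda>x. G n x - (a *\<^sub>R g x + b *\<^sub>R h x)) \<le> \<bar>a\<bar> * L2norm (\<lambda>x. G1 n x - g x) + \<bar>b\<bar> * L2norm (\<lambda>x. G2 n x - h x)" .
  next
    show "(\<lambda>n. \<bar>a\<bar> * L2norm (\<lambda>x. G1 n x - g x) + \<bar>b\<bar> * L2norm (\<lambda>x. G2 n x - h x)) \<longlonglongrightarrow> 0"
      using tendsto_add[OF tendsto_mult[OF tendsto_const 1(3)] tendsto_mult[OF tendsto_const 2(3)]] by simp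
  qed
  have L1: "L2 (\<lambda>x. a * v x + b * w x)"
    using L2_add[OF L2_mult_real[OF Lv(1)] L2_mult_real[OF Lw(1)]] by simp
  have L2': "L2 (\<lambda>x. a *\<^sub>R g x + b *\<^sub>R h x)"
    using L2_add[OF L2_scale[OF Lv(2)] L2_scale[OF Lw(2)]] by simp
  show ?thesis unfolding H01_def using L1 L2' C t1 t2 by blast
qed

lemma H01_diff:
  assumes "H01 \<Omega> v g" "H01 \<Omega> w h"
  shows "H01 \<Omega> (\<lambda>x. v x - w x) (\<lambda>x. g x - h x)"
  using H01_lin[OF assms, of 1 "-1"] by simp

lemma H01_zero_outside:
  assumes H: "H01 \<Omega> v g" and O: "\<Omega> \<in> sets lebesgue"
  shows "AE x in lebesgue. x \<notin> \<Omega> \<longrightarrow> g x = 0"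
proof -
  obtain \<phi> G where 1: "\<And>n. C1c \<Omega> (\<phi> n) (G n)" "(\<lambda>n. L2norm (\<lambda>x. G n x - g x)) \<longlonglongrightarrow> 0"
    using H by (auto simp: H01_def)
  have Lg: "L2 g" using H by (auto simp: H01_def)
  have O': "- \<Omega> \<in> sets lebesgue" using sets.compl_sets[OF O] by (simp add: Compl_eq_Diff_UNIV)
  have le: "L2norm (\<lambda>x. indicator (- \<Omega>) x *\<^sub>R g x) \<le> L2norm (\<lambda>x. G n x - g x)" for n
  proof -
    have "G n x = 0" if "x \<notin> \<Omega>" for x
    proof (rule C1c_zero_outside(1)[OF 1(1)])
      show "x \<notin> closure {x. \<phi> n x \<noteq> 0}" using 1(1)[of n] that by (auto simp: C1c_def)
    qed
    hence "(\<lambda>x. indicator (- \<Omega>) x *\<^sub>R g x) = (\<lambda>x. indicator (- \<Omega>) x *\<^sub>R (- (G n x - g x)))"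
      by (intro ext) (auto simp: indicator_def)
    hence "L2norm (\<lambda>x. indicator (- \<Omega>) x *\<^sub>R g x) = L2norm (\<lambda>x. indicator (- \<Omega>) x *\<^sub>R (- (G n x - g x)))"
      by simp
    also have "\<dots> \<le> L2norm (\<lambda>x. - (G n x - g x))"
      by (intro L2norm_indicator_le O' L2_uminus L2_diff C1c_L2(2)[OF 1(1)] Lg)
    also have "\<dots> = L2norm (\<lambda>x. G n x - g x)" by (rule L2norm_uminus)
    finally show ?thesis .
  qed
  have "L2norm (\<lambda>x. indicator (- \<Omega>) x *\<^sub>R g x) \<le> 0"
    using tendsto_lowerbound[OF 1(2) always_eventually[OF allI[OF le]]] by simp
  hence "Q (\<lambda>x. indicator (- \<Omega>) x *\<^sub>R g x) = 0"
    using L2norm_nonneg L2norm_sq by (metis antisym power_zero_numeral)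
  hence "AE x in lebesgue. indicator (- \<Omega>) x *\<^sub>R g x = 0"
    by (intro Q_zero_AE L2_indicator Lg O')
  thus ?thesis by eventually_elim (auto simp: indicator_def)
qed

lemma H01_closed:
  fixes v :: "nat \<Rightarrow> 'a::euclidean_space \<Rightarrow> real"
  assumes H: "\<And>n. H01 \<Omega> (v n) (g n)" and Lv: "L2 v0" and Lg: "L2 g0"
    and tv: "(\<lambda>n. L2norm (\<lambda>x. v n x - v0 x)) \<longlonglongrightarrow> 0"
    and tg: "(\<lambda>n. L2norm (\<lambda>x. g n x - g0 x)) \<longlonglongrightarrow> 0"
  shows "H01 \<Omega> v0 g0"
proof -
  have "\<exists>\<phi> G. C1c \<Omega> \<phi> G \<and> L2norm (\<lambda>x. \<phi> x - v n x) < 1 / (Suc n) \<and> L2norm (\<lambda>x. G x - g n x) < 1 / (Suc n)" for n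
  proof -
    obtain \<phi> G where 1: "\<And>k. C1c \<Omega> (\<phi> k) (G k)" "(\<lambda>k. L2norm (\<lambda>x. \<phi> k x - v n x)) \<longlonglongrightarrow> 0"
      "(\<lambda>k. L2norm (\<lambda>x. G k x - g n x)) \<longlonglongrightarrow> 0" using H[of n] by (auto simp: H01_def)
    have e: "1 / real (Suc n) > 0" by simp
    obtain k1 where k1: "\<forall>k\<ge>k1. norm (L2norm (\<lambda>x. \<phi> k x - v n x) - 0) < 1 / (Suc n)"
      using LIMSEQ_D[OF 1(2) e] by blast
    obtain k2 where k2: "\<forall>k\<ge>k2. norm (L2norm (\<lambda>x. G k x - g n x) - 0) < 1 / (Suc n)"
      using LIMSEQ_D[OF 1(3) e] by blast
    show ?thesis using 1(1)[of "max k1 k2"] k1[rule_format, of "max k1 k2"] k2[rule_format, of "max k1 k2"]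
      by (auto simp: abs_of_nonneg L2norm_nonneg)
  qed
  then obtain \<phi> G where P: "\<And>n. C1c \<Omega> (\<phi> n) (G n)"
    "\<And>n. L2norm (\<lambda>x. \<phi> n x - v n x) < 1 / (Suc n)" "\<And>n. L2norm (\<lambda>x. G n x - g n x) < 1 / (Suc n)"
    by metis
  have Lvn: "L2 (v n)" "L2 (g n)" for n using H[of n] by (auto simp: H01_def)
  have inv: "(\<lambda>n. 1 / real (Suc n)) \<longlonglongrightarrow> 0" by (rule LIMSEQ_Suc[OF lim_const_over_n[of 1]]) 
  have t1: "(\<lambda>n. L2norm (\<lambda>x. \<phi> n x - v0 x)) \<longlonglongrightarrow> 0"
  proof (rule squeeze0[OF L2norm_nonneg])
    fix n show "L2norm (\<lambda>x. \<phi> n x - v0 x) \<le> 1 / (Suc n) + L2norm (\<lambda>x. v n x - v0 x)"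
      using L2norm_diff_triangle[OF C1c_L2(1)[OF P(1)[of n]] Lvn(1)[of n] Lv] P(2)[of n] by linarith
  next
    show "(\<lambda>n. 1 / real (Suc n) + L2norm (\<lambda>x. v n x - v0 x)) \<longlonglongrightarrow> 0"
      using tendsto_add[OF inv tv] by simp
  qed
  have t2: "(\<lambda>n. L2norm (\<lambda>x. G n x - g0 x)) \<longlonglongrightarrow> 0"
  proof (rule squeeze0[OF L2norm_nonneg])
    fix n show "L2norm (\<lambda>x. G n x - g0 x) \<le> 1 / (Suc n) + L2norm (\<lambda>x. g n x - g0 x)"
      using L2norm_diff_triangle[OF C1c_L2(2)[OF P(1)[of n]] Lvn(2)[of n] Lg] P(3)[of n] by linarith
  next
    show "(\<lambda>n. 1 / real (Suc n) + L2norm (\<lambda>x. g n x - g0 x)) \<longlonglongrightarrow> 0"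
      using tendsto_add[OF inv tg] by simp
  qed
  show ?thesis unfolding H01_def using Lv Lg P(1) t1 t2 by blast
qed



lemma CS_1d:
  fixes g :: "real \<Rightarrow> real"
  assumes L: "L > 0" and c: "continuous_on {0..L} g"
  shows "(LBINT t. indicator {0..L} t *\<^sub>R g t)\<^sup>2 \<le> L * (LBINT t. indicator {0..L} t *\<^sub>R (g t)\<^sup>2)"
proof -
  define I where "I = (LBINT t. indicator {0..L} t *\<^sub>R g t)"
  define J where "J = (LBINT t. indicator {0..L} t *\<^sub>R (g t)\<^sup>2)"
  define k where "k = I / L"
  have i1: "integrable lborel (\<lambda>t. indicator {0..L} t *\<^sub>R g t)"
    using borel_integrable_atLeastAtMost'[OF c] by (simp add: set_integrable_def)
  have c2: "continuous_on {0..L} (\<lambda>t. (g t)\<^sup>2)" using c by (intro continuous_intros)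
  have i2: "integrable lborel (\<lambda>t. indicator {0..L} t *\<^sub>R (g t)\<^sup>2)"
    using borel_integrable_atLeastAtMost'[OF c2] by (simp add: set_integrable_def)
  have i0: "integrable lborel (\<lambda>t. indicator {0..L} t :: real)"
    using borel_integrable_atLeastAtMost'[OF continuous_on_const[of _ "1::real"]] by (simp add: set_integrable_def)
  have m0: "(LBINT t. indicator {0..L} t :: real) = L"
  proof -
    have "(LBINT t. indicator {0..L} t :: real) = measure lborel {0..L}"
      by (simp add: Bochner_Integration.integral_indicator)
    also have "\<dots> = L" using L by (simp add: measure_lborel_Icc)
    finally show ?thesis .
  qed
  have "0 \<le> (LBINT t. indicator {0..L} t *\<^sub>R (g t - k)\<^sup>2)"
    by (intro integral_nonneg_AE) (auto simp: indicator_def)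
  also have "(LBINT t. indicator {0..L} t *\<^sub>R (g t - k)\<^sup>2)
      = (LBINT t. indicator {0..L} t *\<^sub>R (g t)\<^sup>2 - (2 * k) * (indicator {0..L} t *\<^sub>R g t) + k\<^sup>2 * indicator {0..L} t)"
    by (intro Bochner_Integration.integral_cong refl) (simp add: power2_eq_square algebra_simps)
  also have "\<dots> = J - (2 * k) * I + k\<^sup>2 * L"
    using i0 i1 i2 m0 by (simp add: I_def J_def)
  also have "\<dots> = J - I\<^sup>2 / L" using L by (simp add: k_def power2_eq_square field_simps)
  finally have "I\<^sup>2 / L \<le> J" by simp
  hence "I\<^sup>2 \<le> L * J" using L by (simp add: field_simps)
  thus ?thesis by (simp add: I_def J_def)
qed

lemma poincare_pointwise:
  fixes \<phi> :: "'a::euclidean_space \<Rightarrow> real"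
  assumes C: "C1c \<Omega> \<phi> G" and sub: "\<Omega> \<subseteq> ball 0 R" and R: "R > 0" and b: "b \<in> Basis"
  shows "(\<phi> x)\<^sup>2 \<le> 2 * R * (LBINT t. indicator {0..2*R} t *\<^sub>R (norm (G (x + t *\<^sub>R b)))\<^sup>2)"
proof -
  define L where "L = 2 * R"
  have L: "L > 0" using R by (simp add: L_def)
  have nb: "norm b = 1" using b by simp
  have cG: "continuous_on UNIV G" using C by (simp add: C1c_def)
  have cs: "closure {x. \<phi> x \<noteq> 0} \<subseteq> \<Omega>" using C by (simp add: C1c_def)
  have zero: "\<phi> y = 0" if "y \<notin> \<Omega>" for y
  proof (rule C1c_zero_outside(2)[OF C])
    show "y \<notin> closure {x. \<phi> x \<noteq> 0}" using cs that by blast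
  qed
  have RHS: "0 \<le> (LBINT t. indicator {0..L} t *\<^sub>R (norm (G (x + t *\<^sub>R b)))\<^sup>2)"
    by (intro integral_nonneg_AE) (auto simp: indicator_def)
  show ?thesis
  proof (cases "norm x < R")
    case False
    hence "x \<notin> \<Omega>" using sub by auto
    hence "\<phi> x = 0" by (rule zero)
    thus ?thesis using RHS R by (simp add: L_def)
  next
    case True
    define g where "g t = G (x + t *\<^sub>R b) \<bullet> b" for t
    have cg: "continuous_on {0..L} g" unfolding g_def
      by (intro continuous_intros continuous_on_compose2[OF cG]) auto
    have der: "((\<lambda>t. \<phi> (x + t *\<^sub>R b)) has_vector_derivative g t) (at t within {0..L})" for t
    proof -
      have d1: "((\<lambda>t. x + t *\<^sub>R b) has_derivative (\<lambda>s. s *\<^sub>R b)) (at t)"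
        by (auto intro!: derivative_eq_intros)
      have d2: "(\<phi> has_derivative (\<lambda>h. G (x + t *\<^sub>R b) \<bullet> h)) (at (x + t *\<^sub>R b))"
        using C by (simp add: C1c_def)
      have "(\<phi> \<circ> (\<lambda>t. x + t *\<^sub>R b) has_derivative (\<lambda>h. G (x + t *\<^sub>R b) \<bullet> h) \<circ> (\<lambda>s. s *\<^sub>R b)) (at t)"
        by (rule diff_chain_at[OF d1 d2])
      moreover have "(\<lambda>h. G (x + t *\<^sub>R b) \<bullet> h) \<circ> (\<lambda>s. s *\<^sub>R b) = (\<lambda>s. s *\<^sub>R g t)"
        by (auto simp: g_def o_def)
      ultimately have "((\<lambda>t. \<phi> (x + t *\<^sub>R b)) has_vector_derivative g t) (at t)"
        by (simp add: has_vector_derivative_def o_def)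
      thus ?thesis by (rule has_vector_derivative_at_within)
    qed
    have ftc: "(LBINT t. indicator {0..L} t *\<^sub>R g t) = \<phi> (x + L *\<^sub>R b) - \<phi> (x + 0 *\<^sub>R b)"
      using integral_FTC_atLeastAtMost[of 0 L "\<lambda>t. \<phi> (x + t *\<^sub>R b)" g] L der cg by auto
    have "norm (x + L *\<^sub>R b) \<ge> L - norm x"
      using norm_triangle_ineq2[of "L *\<^sub>R b" "- x"] L nb by (simp add: add.commute)
    hence "norm (x + L *\<^sub>R b) \<ge> R" using True by (simp add: L_def)
    hence "x + L *\<^sub>R b \<notin> \<Omega>" using sub by auto
    hence "\<phi> (x + L *\<^sub>R b) = 0" by (rule zero)
    with ftc have I: "(LBINT t. indicator {0..L} t *\<^sub>R g t) = - \<phi> x" by simp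
    have "(\<phi> x)\<^sup>2 = (LBINT t. indicator {0..L} t *\<^sub>R g t)\<^sup>2" using I by simp
    also have "\<dots> \<le> L * (LBINT t. indicator {0..L} t *\<^sub>R (g t)\<^sup>2)" by (rule CS_1d[OF L cg])
    also have "\<dots> \<le> L * (LBINT t. indicator {0..L} t *\<^sub>R (norm (G (x + t *\<^sub>R b)))\<^sup>2)"
    proof (intro mult_left_mono integral_mono)
      have c2: "continuous_on {0..L} (\<lambda>t. (g t)\<^sup>2)" using cg by (intro continuous_intros)
      show "integrable lborel (\<lambda>t. indicator {0..L} t *\<^sub>R (g t)\<^sup>2)"
        using borel_integrable_atLeastAtMost'[OF c2] by (simp add: set_integrable_def)
      have c3: "continuous_on {0..L} (\<lambda>t. (norm (G (x + t *\<^sub>R b)))\<^sup>2)"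
        by (intro continuous_intros continuous_on_compose2[OF cG]) auto
      show "integrable lborel (\<lambda>t. indicator {0..L} t *\<^sub>R (norm (G (x + t *\<^sub>R b)))\<^sup>2)"
        using borel_integrable_atLeastAtMost'[OF c3] by (simp add: set_integrable_def)
      fix t
      have "\<bar>g t\<bar> \<le> norm (G (x + t *\<^sub>R b))"
        using Cauchy_Schwarz_ineq2[of "G (x + t *\<^sub>R b)" b] nb by (simp add: g_def)
      hence "(g t)\<^sup>2 \<le> (norm (G (x + t *\<^sub>R b)))\<^sup>2"
        by (metis abs_ge_zero power2_abs power_mono)
      thus "indicator {0..L} t *\<^sub>R (g t)\<^sup>2 \<le> indicator {0..L} t *\<^sub>R (norm (G (x + t *\<^sub>R b)))\<^sup>2"
        by (auto simp: indicator_def)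
    qed (use L in auto)
    finally show ?thesis by (simp add: L_def)
  qed
qed



lemma nn_translate:
  fixes f :: "'a::euclidean_space \<Rightarrow> ennreal"
  assumes [measurable]: "f \<in> borel_measurable borel"
  shows "(\<integral>\<^sup>+x. f (x + c) \<partial>lborel) = (\<integral>\<^sup>+x. f x \<partial>lborel)"
proof -
  have "(\<integral>\<^sup>+x. f x \<partial>lborel) = (\<integral>\<^sup>+x. f x \<partial>(distr lborel borel ((+) c)))"
    by (simp add: lborel_distr_plus)
  also have "\<dots> = (\<integral>\<^sup>+x. f (c + x) \<partial>lborel)"
    by (rule nn_integral_distr) auto
  finally show ?thesis by (simp add: add.commute)
qed

lemma poincare_C1c:
  fixes \<phi> :: "'a::euclidean_space \<Rightarrow> real"
  assumes C: "C1c \<Omega> \<phi> G" and sub: "\<Omega> \<subseteq> ball 0 R" and R: "R > 0"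
  shows "Q \<phi> \<le> (2*R)\<^sup>2 * Q G"
proof -
  obtain b :: 'a where b: "b \<in> Basis" using nonempty_Basis by blast
  define L where "L = 2 * R"
  have L: "L > 0" using R by (simp add: L_def)
  have cG: "continuous_on UNIV G" using C by (simp add: C1c_def)
  have [measurable]: "G \<in> borel_measurable borel" by (rule borel_measurable_continuous_onI[OF cG])
  have [measurable]: "\<phi> \<in> borel_measurable borel" by (rule borel_measurable_continuous_onI[OF C1c_cont(1)[OF C]])
  define F where "F x t = ennreal (L * (indicator {0..L} t * (norm (G (x + t *\<^sub>R b)))\<^sup>2))" for x t
  have Fm: "(\<lambda>(x, t). F x t) \<in> borel_measurable (lborel \<Otimes>\<^sub>M lborel)"
    unfolding F_def by measurable
  have pw: "ennreal ((norm (\<phi> x))\<^sup>2) \<le> (\<integral>\<^sup>+t. F x t \<partial>lborel)" for x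
  proof -
    have c3: "continuous_on {0..L} (\<lambda>t. (norm (G (x + t *\<^sub>R b)))\<^sup>2)"
      by (intro continuous_intros continuous_on_compose2[OF cG]) auto
    have i: "integrable lborel (\<lambda>t. indicator {0..L} t *\<^sub>R (norm (G (x + t *\<^sub>R b)))\<^sup>2)"
      using borel_integrable_atLeastAtMost'[OF c3] by (simp add: set_integrable_def)
    have "(\<phi> x)\<^sup>2 \<le> L * (LBINT t. indicator {0..L} t *\<^sub>R (norm (G (x + t *\<^sub>R b)))\<^sup>2)"
      using poincare_pointwise[OF C sub R b, of x] by (simp add: L_def)
    hence "ennreal ((norm (\<phi> x))\<^sup>2) \<le> ennreal (L * (LBINT t. indicator {0..L} t *\<^sub>R (norm (G (x + t *\<^sub>R b)))\<^sup>2))"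
      by (simp add: ennreal_leI)
    also have "\<dots> = ennreal L * ennreal (LBINT t. indicator {0..L} t *\<^sub>R (norm (G (x + t *\<^sub>R b)))\<^sup>2)"
      using L by (simp add: ennreal_mult)
    also have "ennreal (LBINT t. indicator {0..L} t *\<^sub>R (norm (G (x + t *\<^sub>R b)))\<^sup>2)
        = (\<integral>\<^sup>+t. ennreal (indicator {0..L} t *\<^sub>R (norm (G (x + t *\<^sub>R b)))\<^sup>2) \<partial>lborel)"
      by (rule nn_integral_eq_integral[OF i, symmetric]) (auto simp: indicator_def)
    also have "ennreal L * \<dots> = (\<integral>\<^sup>+t. ennreal L * ennreal (indicator {0..L} t *\<^sub>R (norm (G (x + t *\<^sub>R b)))\<^sup>2) \<partial>lborel)"
      by (rule nn_integral_cmult[symmetric]) measurable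
    also have "\<dots> = (\<integral>\<^sup>+t. F x t \<partial>lborel)"
      unfolding F_def using L by (intro nn_integral_cong) (simp add: ennreal_mult)
    finally show ?thesis .
  qed
  have inner: "(\<integral>\<^sup>+x. F x t \<partial>lborel) = ennreal (L * indicator {0..L} t) * ennreal (Q G)" for t
  proof -
    have "(\<integral>\<^sup>+x. F x t \<partial>lborel) = (\<integral>\<^sup>+x. ennreal (L * indicator {0..L} t) * ennreal ((norm (G (x + t *\<^sub>R b)))\<^sup>2) \<partial>lborel)"
      unfolding F_def using L by (intro nn_integral_cong) (simp add: ennreal_mult[symmetric] mult.assoc)
    also have "\<dots> = ennreal (L * indicator {0..L} t) * (\<integral>\<^sup>+x. ennreal ((norm (G (x + t *\<^sub>R b)))\<^sup>2) \<partial>lborel)"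
      by (rule nn_integral_cmult) measurable
    also have "(\<integral>\<^sup>+x. ennreal ((norm (G (x + t *\<^sub>R b)))\<^sup>2) \<partial>lborel) = (\<integral>\<^sup>+x. ennreal ((norm (G x))\<^sup>2) \<partial>lborel)"
      by (rule nn_translate[of "\<lambda>x. ennreal ((norm (G x))\<^sup>2)"]) measurable
    also have "\<dots> = (\<integral>\<^sup>+x. ennreal ((norm (G x))\<^sup>2) \<partial>lebesgue)" by (simp add: nn_integral_completion)
    also have "\<dots> = ennreal (Q G)" by (rule nn_Q[OF C1c_L2(2)[OF C]])
    finally show ?thesis .
  qed
  have "ennreal (Q \<phi>) = (\<integral>\<^sup>+x. ennreal ((norm (\<phi> x))\<^sup>2) \<partial>lebesgue)" by (rule nn_Q[OF C1c_L2(1)[OF C], symmetric])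
  also have "\<dots> = (\<integral>\<^sup>+x. ennreal ((norm (\<phi> x))\<^sup>2) \<partial>lborel)" by (simp add: nn_integral_completion)
  also have "\<dots> \<le> (\<integral>\<^sup>+x. (\<integral>\<^sup>+t. F x t \<partial>lborel) \<partial>lborel)" by (intro nn_integral_mono pw)
  also have "\<dots> = (\<integral>\<^sup>+t. (\<integral>\<^sup>+x. F x t \<partial>lborel) \<partial>lborel)"
    by (rule lborel_pair.Fubini'[OF Fm, symmetric])
  also have "\<dots> = (\<integral>\<^sup>+t. (ennreal (Q G) * ennreal L) * indicator {0..L} t \<partial>lborel)"
    unfolding inner using L by (intro nn_integral_cong) (auto simp: indicator_def ennreal_mult mult.commute)
  also have "\<dots> = (ennreal (Q G) * ennreal L) * emeasure lborel {0..L}"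
    by (rule nn_integral_cmult_indicator) simp
  also have "\<dots> = ennreal (L * L * Q G)"
    using L Q_nonneg[of G] by (simp add: emeasure_lborel_Icc ennreal_mult[symmetric] mult.commute mult.left_commute)
  finally have "Q \<phi> \<le> L * L * Q G" using L Q_nonneg[of G] by (simp add: ennreal_le_iff)
  thus ?thesis by (simp add: L_def power2_eq_square algebra_simps)
qed



lemma poincare_H01:
  assumes H: "H01 \<Omega> v g" and sub: "\<Omega> \<subseteq> ball 0 R" and R: "R > 0"
  shows "L2norm v \<le> 2 * R * L2norm g"
proof -
  obtain \<phi> G where 1: "\<And>n. C1c \<Omega> (\<phi> n) (G n)" "(\<lambda>n. L2norm (\<lambda>x. \<phi> n x - v x)) \<longlonglongrightarrow> 0"
    "(\<lambda>n. L2norm (\<lambda>x. G n x - g x)) \<longlonglongrightarrow> 0" using H by (auto simp: H01_def)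
  have Lv: "L2 v" "L2 g" using H by (auto simp: H01_def)
  have b: "L2norm v - 2 * R * L2norm g \<le> L2norm (\<lambda>x. \<phi> n x - v x) + 2 * R * L2norm (\<lambda>x. G n x - g x)" for n
  proof -
    have p: "L2norm (\<phi> n) \<le> 2 * R * L2norm (G n)"
    proof -
      have "Q (\<phi> n) \<le> (2*R)\<^sup>2 * Q (G n)" by (rule poincare_C1c[OF 1(1) sub R])
      hence "sqrt (Q (\<phi> n)) \<le> sqrt ((2*R)\<^sup>2 * Q (G n))" by (rule real_sqrt_le_mono)
      thus ?thesis using R by (simp add: L2norm_Q real_sqrt_mult)
    qed
    have "L2norm (\<lambda>x. v x - 0) \<le> L2norm (\<lambda>x. v x - \<phi> n x) + L2norm (\<lambda>x. \<phi> n x - 0)"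
      by (rule L2norm_diff_triangle[OF Lv(1) C1c_L2(1)[OF 1(1)] L2_zero])
    hence a: "L2norm v \<le> L2norm (\<lambda>x. \<phi> n x - v x) + L2norm (\<phi> n)"
      by (simp add: L2norm_minus_commute)
    have "L2norm (\<lambda>x. G n x - 0) \<le> L2norm (\<lambda>x. G n x - g x) + L2norm (\<lambda>x. g x - 0)"
      by (rule L2norm_diff_triangle[OF C1c_L2(2)[OF 1(1)] Lv(2) L2_zero])
    hence c: "L2norm (G n) \<le> L2norm (\<lambda>x. G n x - g x) + L2norm g" by simp
    have "2 * R * L2norm (G n) \<le> 2 * R * (L2norm (\<lambda>x. G n x - g x) + L2norm g)"
      using c R by (intro mult_left_mono) auto
    thus ?thesis using a p by (simp add: algebra_simps)
  qed
  have t: "(\<lambda>n. L2norm (\<lambda>x. \<phi> n x - v x) + 2 * R * L2norm (\<lambda>x. G n x - g x)) \<longlonglongrightarrow> 0"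
    using tendsto_add[OF 1(2) tendsto_mult[OF tendsto_const 1(3)]] by simp
  have "L2norm v - 2 * R * L2norm g \<le> 0"
    using tendsto_lowerbound[OF t always_eventually[OF allI[OF b]]] by simp
  thus ?thesis by simp
qed

lemma le_of_tendsto:
  fixes c a :: real
  assumes "\<And>n. n \<ge> N \<Longrightarrow> c \<le> a + d n" "d \<longlonglongrightarrow> 0"
  shows "c \<le> a"
proof -
  have "(\<lambda>n. a + d n) \<longlonglongrightarrow> a + 0" by (intro tendsto_add tendsto_const assms(2))
  moreover have "eventually (\<lambda>n. c \<le> a + d n) sequentially"
    using assms(1) by (auto simp: eventually_sequentially)
  ultimately show ?thesis using tendsto_lowerbound by fastforce
qed

lemma sint_integrable:
  fixes f g :: "'a::euclidean_space \<Rightarrow> 'b::euclidean_space"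
  assumes "L2 f" "L2 g" "A \<in> sets lebesgue"
  shows "set_integrable lebesgue A (\<lambda>x. f x \<bullet> g x)"
  unfolding set_integrable_def using integrable_mult_indicator[OF assms(3) L2_inner_integrable[OF assms(1,2)]] .

lemma sint_diff_left:
  fixes f1 f2 g :: "'a::euclidean_space \<Rightarrow> 'b::euclidean_space"
  assumes "L2 f1" "L2 f2" "L2 g" "A \<in> sets lebesgue"
  shows "(LINT x:A|lebesgue. (f1 x - f2 x) \<bullet> g x) = (LINT x:A|lebesgue. f1 x \<bullet> g x) - (LINT x:A|lebesgue. f2 x \<bullet> g x)"
  using set_integral_diff(2)[OF sint_integrable[OF assms(1,3,4)] sint_integrable[OF assms(2,3,4)]]
  by (simp add: inner_diff_left)

lemma sint_diff_right:
  fixes f g1 g2 :: "'a::euclidean_space \<Rightarrow> 'b::euclidean_space"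
  assumes "L2 f" "L2 g1" "L2 g2" "A \<in> sets lebesgue"
  shows "(LINT x:A|lebesgue. f x \<bullet> (g1 x - g2 x)) = (LINT x:A|lebesgue. f x \<bullet> g1 x) - (LINT x:A|lebesgue. f x \<bullet> g2 x)"
  using set_integral_diff(2)[OF sint_integrable[OF assms(1,2,4)] sint_integrable[OF assms(1,3,4)]]
  by (simp add: inner_diff_right)

lemma sint_commute:
  "(LINT x:A|lebesgue. (f x::'b::euclidean_space) \<bullet> g x) = (LINT x:A|lebesgue. g x \<bullet> f x)"
  by (simp add: inner_commute)

lemma sint_zero_AE:
  assumes "AE x in lebesgue. x \<in> A \<longrightarrow> h x = 0"
  shows "(LINT x:A|lebesgue. (f x::'b::euclidean_space) \<bullet> h x) = 0"
  unfolding set_lebesgue_integral_def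
  by (rule integral_eq_zero_AE) (use assms in \<open>auto simp: indicator_def elim!: AE_mp\<close>)

lemma decomp:
  fixes f g :: "'a::euclidean_space \<Rightarrow> 'b::euclidean_space"
  assumes Om: "\<And>j. j \<in> I \<Longrightarrow> Om j \<in> sets lebesgue" "\<And>j. j \<in> I \<Longrightarrow> Om j \<subseteq> \<Omega>"
    and disj: "\<And>i j. i \<in> I \<Longrightarrow> j \<in> I \<Longrightarrow> i \<noteq> j \<Longrightarrow> Om i \<inter> Om j = {}"
    and fin: "finite I" and null: "\<Omega> - (\<Union>j\<in>I. Om j) \<in> null_sets lebesgue"
    and f: "L2 f" and g: "L2 g" and z: "AE x in lebesgue. x \<notin> \<Omega> \<longrightarrow> f x = 0"
  shows "(\<integral>x. f x \<bullet> g x \<partial>lebesgue) = (\<Sum>j\<in>I. LINT x:Om j|lebesgue. f x \<bullet> g x)"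
proof -
  have ae: "AE x in lebesgue. f x \<bullet> g x = (\<Sum>j\<in>I. indicator (Om j) x *\<^sub>R (f x \<bullet> g x))"
    using AE_not_in[OF null] z
  proof eventually_elim
    case (elim x)
    show ?case
    proof (cases "\<exists>j\<in>I. x \<in> Om j")
      case True
      then obtain j0 where j0: "j0 \<in> I" "x \<in> Om j0" by blast
      have "(\<Sum>j\<in>I. indicator (Om j) x *\<^sub>R (f x \<bullet> g x)) = indicator (Om j0) x *\<^sub>R (f x \<bullet> g x) + (\<Sum>j\<in>I - {j0}. indicator (Om j) x *\<^sub>R (f x \<bullet> g x))"
        using fin j0(1) by (rule sum.remove)
      also have "(\<Sum>j\<in>I - {j0}. indicator (Om j) x *\<^sub>R (f x \<bullet> g x)) = 0"
      proof (rule sum.neutral, rule ballI)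
        fix j assume "j \<in> I - {j0}"
        hence "x \<notin> Om j" using disj[of j j0] j0 by auto
        thus "indicator (Om j) x *\<^sub>R (f x \<bullet> g x) = 0" by simp
      qed
      finally show ?thesis using j0 by simp
    next
      case False
      hence "x \<notin> \<Omega>" using elim(1) by blast
      hence "f x = 0" using elim(2) by blast
      thus ?thesis by simp
    qed
  qed
  have isum: "integrable lebesgue (\<lambda>x. \<Sum>j\<in>I. indicator (Om j) x *\<^sub>R (f x \<bullet> g x))"
    by (rule Bochner_Integration.integrable_sum) (use sint_integrable[OF f g Om(1)] in \<open>auto simp: set_integrable_def\<close>)
  have "(\<integral>x. f x \<bullet> g x \<partial>lebesgue) = (\<integral>x. (\<Sum>j\<in>I. indicator (Om j) x *\<^sub>R (f x \<bullet> g x)) \<partial>lebesgue)"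
    by (rule integral_cong_AE[OF borel_measurable_integrable[OF L2_inner_integrable[OF f g]] borel_measurable_integrable[OF isum] ae])
  also have "\<dots> = (\<Sum>j\<in>I. (\<integral>x. indicator (Om j) x *\<^sub>R (f x \<bullet> g x) \<partial>lebesgue))"
    by (rule Bochner_Integration.integral_sum)
      (use sint_integrable[OF f g Om(1)] in \<open>auto simp: set_integrable_def\<close>)
  finally show ?thesis by (simp add: set_lebesgue_integral_def)
qed


theorem mainTheorem1:
  fixes \<Omega> :: "'a::euclidean_space set" and Om :: "nat \<Rightarrow> 'a set" and d :: nat
    and F :: "('a \<Rightarrow> real) \<Rightarrow> real"
    and u :: "(nat \<Rightarrow> real) \<Rightarrow> 'a \<Rightarrow> real" and gu :: "(nat \<Rightarrow> real) \<Rightarrow> 'a \<Rightarrow> 'a"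
    and S :: "nat set" and ys :: "nat \<Rightarrow> real"
  assumes "open \<Omega>" and "bounded \<Omega>"
    and "\<And>j. j \<in> {1..d} \<Longrightarrow> open (Om j) \<and> Om j \<subseteq> \<Omega>"
    and "\<And>i j. i \<in> {1..d} \<Longrightarrow> j \<in> {1..d} \<Longrightarrow> i \<noteq> j \<Longrightarrow> Om i \<inter> Om j = {}"
    and "closure \<Omega> \<subseteq> (\<Union>j\<in>{1..d}. closure (Om j))"
    and "\<Omega> - (\<Union>j\<in>{1..d}. Om j) \<in> null_sets lebesgue"
    and "Hminus1 \<Omega> F"
    and u_sol: "\<And>y. (\<forall>j\<in>{1..d}. y j > 0) \<Longrightarrow> H01 \<Omega> (u y) (gu y) \<and>
         (\<forall>v h. H01 \<Omega> v h \<longrightarrow>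
            (\<Sum>j\<in>{1..d}. y j * (LINT x:Om j|lebesgue. gu y x \<bullet> h x)) = F v)"
    and "S \<subseteq> {1..d}"
    and "\<forall>j\<in>{1..d} - S. ys j > 0"
  shows "\<exists>uS gS. H01 \<Omega> uS gS \<and> VS Om S gS \<and>
     (\<forall>v h. H01 \<Omega> v h \<and> VS Om S h \<longrightarrow>
        (\<Sum>j\<in>{1..d} - S. ys j * (LINT x:Om j|lebesgue. gS x \<bullet> h x)) = F v) \<and>
     (\<forall>w k. H01 \<Omega> w k \<and> VS Om S k \<and>
        (\<forall>v h. H01 \<Omega> v h \<and> VS Om S h \<longrightarrow>
           (\<Sum>j\<in>{1..d} - S. ys j * (LINT x:Om j|lebesgue. k x \<bullet> h x)) = F v)
        \<longrightarrow> L2norm (\<lambda>x. k x - gS x) = 0) \<and>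
     (\<forall>\<epsilon>>0. \<exists>M>0. \<forall>y. (\<forall>j\<in>{1..d} - S. y j = ys j) \<and> (\<forall>j\<in>S. y j > M) \<longrightarrow>
        L2norm (\<lambda>x. gu y x - gS x) < \<epsilon>)"
proof -
  let ?I = "{1..d::nat}" and ?T = "{1..d} - S"
  have fin: "finite ?I" by simp
  have finT: "finite ?T" by simp
  have finS: "finite S" using assms(9) finite_subset by blast
  have Omm: "Om j \<in> sets lebesgue" if "j \<in> ?I" for j using assms(3)[OF that] by auto
  have Oms: "Om j \<subseteq> \<Omega>" if "j \<in> ?I" for j using assms(3)[OF that] by auto
  have \<Omega>m: "\<Omega> \<in> sets lebesgue" using assms(1) by auto
  obtain R where R: "R > 0" "\<Omega> \<subseteq> ball 0 R" using bounded_subset_ballD[OF assms(2)] by blast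
  define a where "a y g h = (\<Sum>j\<in>?I. y j * (LINT x:Om j|lebesgue. g x \<bullet> h x))"
    for y :: "nat \<Rightarrow> real" and g h :: "'a \<Rightarrow> 'a"
  define pos where "pos y \<longleftrightarrow> (\<forall>j\<in>?I. y j > (0::real))" for y
  have sol: "H01 \<Omega> (u y) (gu y)" if "pos y" for y using u_sol that by (auto simp: pos_def)
  have eq: "a y (gu y) h = F v" if "pos y" "H01 \<Omega> v h" for y v h
    using u_sol[of y] that by (auto simp: pos_def a_def)
  have zo: "AE x in lebesgue. x \<notin> \<Omega> \<longrightarrow> h x = 0" if "H01 \<Omega> v h" for v h
    by (rule H01_zero_outside[OF that \<Omega>m])
  have dec: "(\<integral>x. f x \<bullet> g x \<partial>lebesgue) = (\<Sum>j\<in>?I. LINT x:Om j|lebesgue. f x \<bullet> g x)"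
    if "L2 f" "L2 g" "AE x in lebesgue. x \<notin> \<Omega> \<longrightarrow> f x = 0" for f g :: "'a \<Rightarrow> 'a"
    by (rule decomp[OF Omm Oms assms(4) fin assms(6) that]) auto
  have termnn: "0 \<le> y j * (LINT x:Om j|lebesgue. g x \<bullet> g x)" if "pos y" "j \<in> ?I" for y j and g :: "'a \<Rightarrow> 'a"
  proof -
    have "y j > 0" using that by (simp add: pos_def)
    moreover have "0 \<le> (LINT x:Om j|lebesgue. g x \<bullet> g x)" by (rule set_Q_nonneg)
    ultimately show ?thesis by simp
  qed
  have a_nonneg: "a y g g \<ge> 0" if "pos y" for y g
    unfolding a_def by (rule sum_nonneg) (rule termnn[OF that])
  have K2: "a y (gu y) (gu y) = F (u y)" if "pos y" for y by (rule eq[OF that sol[OF that]])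
  have Pnn: "F (u y) \<ge> 0" if "pos y" for y using K2[OF that] a_nonneg[OF that, of "gu y"] by simp
  have single: "y j * (LINT x:Om j|lebesgue. gu y x \<bullet> gu y x) \<le> F (u y)" if "pos y" "j \<in> ?I" for y j
  proof -
    have "y j * (LINT x:Om j|lebesgue. gu y x \<bullet> gu y x) \<le> a y (gu y) (gu y)"
      unfolding a_def by (rule member_le_sum[OF that(2) _ fin]) (rule termnn[OF that(1)], blast)
    thus ?thesis using K2[OF that(1)] by simp
  qed
  have K3: "a y (\<lambda>x. gu y' x - gu y x) (\<lambda>x. gu y' x - gu y x) \<le> F (u y) - F (u y')"
    if py: "pos y" and py': "pos y'" and le: "\<forall>j\<in>?I. y j \<le> y' j" for y y'
  proof -
    let ?A = "gu y" and ?B = "gu y'"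
    have LA: "L2 ?A" using sol[OF py] by (rule H01_L2)
    have LB: "L2 ?B" using sol[OF py'] by (rule H01_L2)
    have trm: "(LINT x:Om j|lebesgue. (?B x - ?A x) \<bullet> (?B x - ?A x))
        = (LINT x:Om j|lebesgue. ?B x \<bullet> ?B x) - 2 * (LINT x:Om j|lebesgue. ?A x \<bullet> ?B x) + (LINT x:Om j|lebesgue. ?A x \<bullet> ?A x)"
      if j: "j \<in> ?I" for j
      using sint_diff_left[OF LB LA L2_diff[OF LB LA] Omm[OF j]]
        sint_diff_right[OF LB LB LA Omm[OF j]] sint_diff_right[OF LA LB LA Omm[OF j]]
        sint_commute[of "Om j" ?B ?A]
      by simp
    have "a y (\<lambda>x. ?B x - ?A x) (\<lambda>x. ?B x - ?A x) = a y ?B ?B - 2 * a y ?A ?B + a y ?A ?A"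
    proof -
      have "a y (\<lambda>x. ?B x - ?A x) (\<lambda>x. ?B x - ?A x) = (\<Sum>j\<in>?I. y j * (LINT x:Om j|lebesgue. ?B x \<bullet> ?B x) - 2 * (y j * (LINT x:Om j|lebesgue. ?A x \<bullet> ?B x)) + y j * (LINT x:Om j|lebesgue. ?A x \<bullet> ?A x))"
        unfolding a_def by (intro sum.cong refl) (subst trm, assumption, simp add: algebra_simps)
      also have "\<dots> = a y ?B ?B - 2 * a y ?A ?B + a y ?A ?A"
        by (simp add: a_def sum.distrib sum_subtractf sum_distrib_left)
      finally show ?thesis .
    qed
    also have "a y ?B ?B \<le> a y' ?B ?B"
      unfolding a_def using le set_Q_nonneg by (intro sum_mono mult_right_mono) auto
    also have "a y ?A ?B = F (u y')" by (rule eq[OF py sol[OF py']])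
    also have "a y' ?B ?B = F (u y')" by (rule K2[OF py'])
    also have "a y ?A ?A = F (u y)" by (rule K2[OF py])
    finally show ?thesis by simp
  qed
  have K4: "m * Q D \<le> a y D D"
    if py: "pos y" and my: "\<forall>j\<in>?I. m \<le> y j" and m: "m \<ge> 0" and LD: "L2 D"
      and zD: "AE x in lebesgue. x \<notin> \<Omega> \<longrightarrow> D x = 0" for y m D
  proof -
    have "Q D = (\<integral>x. D x \<bullet> D x \<partial>lebesgue)" unfolding Q_def by (simp add: power2_norm_eq_inner)
    also have "\<dots> = (\<Sum>j\<in>?I. LINT x:Om j|lebesgue. D x \<bullet> D x)" by (rule dec[OF LD LD zD])
    finally have "m * Q D = (\<Sum>j\<in>?I. m * (LINT x:Om j|lebesgue. D x \<bullet> D x))" by (simp add: sum_distrib_left)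
    also have "\<dots> \<le> a y D D" unfolding a_def using my set_Q_nonneg by (intro sum_mono mult_right_mono) auto
    finally show ?thesis .
  qed
  define m0 where "m0 = Min (insert 1 (ys ` ?T))"
  have m0pos: "m0 > 0" unfolding m0_def using assms(10) finT by (subst Min_gr_iff) auto
  have m0le1: "m0 \<le> 1" unfolding m0_def using finT by (intro Min_le) auto
  have m0leT: "m0 \<le> ys j" if "j \<in> ?T" for j unfolding m0_def using finT that by (intro Min_le) auto
  define adm where "adm M y \<longleftrightarrow> (\<forall>j\<in>?T. y j = ys j) \<and> (\<forall>j\<in>S. y j > M)" for M :: real and y
  have adm_pos: "pos y" if "adm M y" "M \<ge> 0" for M y
    unfolding pos_def
  proof
    fix j assume j: "j \<in> ?I"
    show "y j > 0"
    proof (cases "j \<in> S")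
      case True thus ?thesis using that by (auto simp: adm_def)
    next
      case False thus ?thesis using that j assms(10) by (auto simp: adm_def)
    qed
  qed
  have adm_m0: "\<forall>j\<in>?I. m0 \<le> y j" if "adm M y" "M \<ge> 1" for M y
  proof
    fix j assume j: "j \<in> ?I"
    show "m0 \<le> y j"
    proof (cases "j \<in> S")
      case True thus ?thesis using that m0le1 by (auto simp: adm_def)
    next
      case False thus ?thesis using that j m0leT by (auto simp: adm_def)
    qed
  qed
  have adm_mono: "adm M' y" if "adm M y" "M' \<le> M" for M M' y
    using that by (auto simp: adm_def)
  define Pset where "Pset = (\<lambda>y. F (u y)) ` {y. adm 1 y}"
  define E where "E = Inf Pset"
  define y2 where "y2 = (\<lambda>j. if j \<in> S then 2 else ys j)"
  have "adm 1 y2" by (auto simp: adm_def y2_def)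
  hence Pne: "Pset \<noteq> {}" by (auto simp: Pset_def)
  have Pbdd: "bdd_below Pset"
    unfolding Pset_def by (rule bdd_belowI[of _ 0]) (use Pnn adm_pos in auto)
  have E_le: "E \<le> F (u y)" if "adm 1 y" for y
    unfolding E_def by (rule cInf_lower[OF _ Pbdd]) (use that in \<open>auto simp: Pset_def\<close>)
  have E_approx: "\<exists>y0. adm 1 y0 \<and> F (u y0) < E + e" if "e > 0" for e
  proof -
    have "Inf Pset < E + e" using that by (simp add: E_def)
    then obtain p where "p \<in> Pset" "p < E + e" using cInf_less_iff[OF Pne Pbdd] by blast
    thus ?thesis by (auto simp: Pset_def)
  qed
  have KC: "\<exists>M\<ge>1. \<exists>y0. adm 1 y0 \<and> (\<forall>y. adm M y \<longrightarrow> L2norm (\<lambda>x. gu y x - gu y0 x) \<le> e)"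
    if e: "e > 0" for e
  proof -
    obtain y0 where y0: "adm 1 y0" "F (u y0) < E + m0 * e\<^sup>2" using E_approx[of "m0 * e\<^sup>2"] m0pos e by auto
    define M where "M = max 1 (Max (y0 ` S))"
    have M1: "M \<ge> 1" by (simp add: M_def)
    have "L2norm (\<lambda>x. gu y x - gu y0 x) \<le> e" if y: "adm M y" for y
    proof -
      have py: "pos y" using adm_pos[OF y] M1 by simp
      have py0: "pos y0" using adm_pos[OF y0(1)] by simp
      have le: "\<forall>j\<in>?I. y0 j \<le> y j"
      proof
        fix j assume j: "j \<in> ?I"
        show "y0 j \<le> y j"
        proof (cases "j \<in> S")
          case True
          hence "y0 j \<le> Max (y0 ` S)" using finS by (intro Max_ge) auto
          also have "\<dots> \<le> M" by (simp add: M_def)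
          also have "M < y j" using y True by (auto simp: adm_def)
          finally show ?thesis by simp
        next
          case False thus ?thesis using y y0 j by (auto simp: adm_def)
        qed
      qed
      let ?D = "\<lambda>x. gu y x - gu y0 x"
      have HD: "H01 \<Omega> (\<lambda>x. u y x - u y0 x) ?D" by (rule H01_diff[OF sol[OF py] sol[OF py0]])
      have "m0 * Q ?D \<le> a y0 ?D ?D"
        by (rule K4[OF py0 adm_m0[OF y0(1)] less_imp_le[OF m0pos] H01_L2(2)[OF HD] zo[OF HD]]) simp
      also have "\<dots> \<le> F (u y0) - F (u y)" by (rule K3[OF py0 py le])
      also have "\<dots> < m0 * e\<^sup>2" using y0(2) E_le[OF adm_mono[OF y M1]] by simp
      finally have "Q ?D < e\<^sup>2" using m0pos by simp
      hence "sqrt (Q ?D) \<le> sqrt (e\<^sup>2)" by (intro real_sqrt_le_mono less_imp_le)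
      thus ?thesis using e by (simp add: L2norm_Q)
    qed
    thus ?thesis using M1 y0(1) by blast
  qed
  define yn where "yn n = (\<lambda>j. if j \<in> S then real n + 1 else ys j)" for n :: nat
  have adm_yn: "adm M (yn n)" if "M \<le> real n" for M n
    using that by (auto simp: adm_def yn_def)
  have pyn: "pos (yn n)" for n using adm_pos[OF adm_yn[of 0 n]] by simp
  have Lgn: "L2 (gu (yn n))" for n using sol[OF pyn] by (rule H01_L2)
  have Lun: "L2 (u (yn n))" for n using sol[OF pyn] by (rule H01_L2)
  have gC: "\<exists>N. \<forall>m\<ge>N. \<forall>n\<ge>N. L2norm (\<lambda>x. gu (yn m) x - gu (yn n) x) < e" if e: "e > 0" for e
  proof -
    obtain M y0 where M: "M \<ge> 1" "adm 1 y0" "\<And>y. adm M y \<Longrightarrow> L2norm (\<lambda>x. gu y x - gu y0 x) \<le> e / 4"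
      using KC[of "e/4"] e by auto
    have py0: "pos y0" using adm_pos[OF M(2)] by simp
    have Ly0: "L2 (gu y0)" using sol[OF py0] by (rule H01_L2)
    show ?thesis
    proof (intro exI allI impI)
      fix m n assume m: "m \<ge> nat \<lceil>M\<rceil>" and n: "n \<ge> nat \<lceil>M\<rceil>"
      have "M \<le> real m" using of_nat_ceiling[of M] of_nat_mono[OF m, where 'a=real] by linarith
      hence am: "adm M (yn m)" by (rule adm_yn)
      have "M \<le> real n" using of_nat_ceiling[of M] of_nat_mono[OF n, where 'a=real] by linarith
      hence an: "adm M (yn n)" by (rule adm_yn)
      have "L2norm (\<lambda>x. gu (yn m) x - gu (yn n) x) \<le> L2norm (\<lambda>x. gu (yn m) x - gu y0 x) + L2norm (\<lambda>x. gu y0 x - gu (yn n) x)"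
        by (rule L2norm_diff_triangle[OF Lgn Ly0 Lgn])
      also have "\<dots> \<le> e/4 + e/4"
        using M(3)[OF am] M(3)[OF an] by (simp add: L2norm_minus_commute[of "gu y0"])
      finally show "L2norm (\<lambda>x. gu (yn m) x - gu (yn n) x) < e" using e by simp
    qed
  qed
  have uC: "\<exists>N. \<forall>m\<ge>N. \<forall>n\<ge>N. L2norm (\<lambda>x. u (yn m) x - u (yn n) x) < e" if e: "e > 0" for e
  proof -
    obtain N where N: "\<forall>m\<ge>N. \<forall>n\<ge>N. L2norm (\<lambda>x. gu (yn m) x - gu (yn n) x) < e / (2 * R)"
      using gC[of "e / (2 * R)"] e R(1) by auto
    show ?thesis
    proof (intro exI allI impI)
      fix m n assume m: "m \<ge> N" and n: "n \<ge> N"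
      have HD: "H01 \<Omega> (\<lambda>x. u (yn m) x - u (yn n) x) (\<lambda>x. gu (yn m) x - gu (yn n) x)"
        by (rule H01_diff[OF sol[OF pyn] sol[OF pyn]])
      have "L2norm (\<lambda>x. u (yn m) x - u (yn n) x) \<le> 2 * R * L2norm (\<lambda>x. gu (yn m) x - gu (yn n) x)"
        by (rule poincare_H01[OF HD R(2) R(1)])
      also have "\<dots> < 2 * R * (e / (2 * R))" using N m n R(1) by (intro mult_strict_left_mono) auto
      also have "\<dots> = e" using R(1) by simp
      finally show "L2norm (\<lambda>x. u (yn m) x - u (yn n) x) < e" .
    qed
  qed
  obtain gS where gS: "L2 gS" "(\<lambda>n. L2norm (\<lambda>x. gu (yn n) x - gS x)) \<longlonglongrightarrow> 0"
    using L2_complete[of "\<lambda>n. gu (yn n)", OF Lgn gC] by blast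
  obtain uS where uS: "L2 uS" "(\<lambda>n. L2norm (\<lambda>x. u (yn n) x - uS x)) \<longlonglongrightarrow> 0"
    using L2_complete[of "\<lambda>n. u (yn n)", OF Lun uC] by blast
  have HS: "H01 \<Omega> uS gS" by (rule H01_closed[OF sol[OF pyn] uS(1) gS(1) uS(2) gS(2)])
  have P0: "F (u (yn n)) \<le> F (u (yn 0))" for n
  proof -
    have "0 \<le> a (yn 0) (\<lambda>x. gu (yn n) x - gu (yn 0) x) (\<lambda>x. gu (yn n) x - gu (yn 0) x)"
      by (rule a_nonneg[OF pyn])
    also have "\<dots> \<le> F (u (yn 0)) - F (u (yn n))" by (rule K3[OF pyn pyn]) (auto simp: yn_def)
    finally show ?thesis by simp
  qed
  have VSg: "VS Om S gS" unfolding VS_def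
  proof
    fix j assume jS: "j \<in> S"
    have jI: "j \<in> ?I" using jS assms(9) by auto
    let ?P0 = "F (u (yn 0))"
    let ?d = "\<lambda>n. L2norm (\<lambda>x. gu (yn n) x - gS x) + sqrt (?P0 / real (Suc n))"
    have Lind: "L2 (\<lambda>x. indicator (Om j) x *\<^sub>R gS x)" by (rule L2_indicator[OF gS(1) Omm[OF jI]])
    have bnd: "L2norm (\<lambda>x. indicator (Om j) x *\<^sub>R gS x) \<le> 0 + ?d n" for n
    proof -
      have "(\<lambda>x. indicator (Om j) x *\<^sub>R gS x) = (\<lambda>x. indicator (Om j) x *\<^sub>R (gS x - gu (yn n) x) + indicator (Om j) x *\<^sub>R gu (yn n) x)"
        by (simp add: algebra_simps)
      hence "L2norm (\<lambda>x. indicator (Om j) x *\<^sub>R gS x) = L2norm (\<lambda>x. indicator (Om j) x *\<^sub>R (gS x - gu (yn n) x) + indicator (Om j) x *\<^sub>R gu (yn n) x)"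
        by simp
      also have "\<dots> \<le> L2norm (\<lambda>x. indicator (Om j) x *\<^sub>R (gS x - gu (yn n) x)) + L2norm (\<lambda>x. indicator (Om j) x *\<^sub>R gu (yn n) x)"
        by (intro L2norm_triangle L2_indicator L2_diff gS(1) Lgn Omm[OF jI])
      also have "L2norm (\<lambda>x. indicator (Om j) x *\<^sub>R (gS x - gu (yn n) x)) \<le> L2norm (\<lambda>x. gu (yn n) x - gS x)"
        using L2norm_indicator_le[OF L2_diff[OF gS(1) Lgn] Omm[OF jI]] by (simp add: L2norm_minus_commute)
      also have "L2norm (\<lambda>x. indicator (Om j) x *\<^sub>R gu (yn n) x) \<le> sqrt (?P0 / real (Suc n))"
      proof -
        have qi: "Q (\<lambda>x. indicator (Om j) x *\<^sub>R gu (yn n) x) = (LINT x:Om j|lebesgue. gu (yn n) x \<bullet> gu (yn n) x)"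
          unfolding Q_def set_lebesgue_integral_def
          by (intro Bochner_Integration.integral_cong refl) (auto simp: indicator_def power2_norm_eq_inner)
        have "yn n j * (LINT x:Om j|lebesgue. gu (yn n) x \<bullet> gu (yn n) x) \<le> F (u (yn n))"
          by (rule single[OF pyn jI])
        also note P0[of n]
        finally have "real (Suc n) * (LINT x:Om j|lebesgue. gu (yn n) x \<bullet> gu (yn n) x) \<le> ?P0"
          using jS by (simp add: yn_def add.commute)
        hence "(LINT x:Om j|lebesgue. gu (yn n) x \<bullet> gu (yn n) x) \<le> ?P0 / real (Suc n)"
          by (simp add: field_simps del: of_nat_Suc)
        thus ?thesis using qi by (simp add: L2norm_Q)
      qed
      finally show ?thesis by simp
    qed
    have "(\<lambda>n. ?P0 / real (Suc n)) \<longlonglongrightarrow> 0" by (rule LIMSEQ_Suc[OF lim_const_over_n])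
    hence "(\<lambda>n. sqrt (?P0 / real (Suc n))) \<longlonglongrightarrow> sqrt 0" by (rule tendsto_real_sqrt)
    hence dlim: "?d \<longlonglongrightarrow> 0" using tendsto_add[OF gS(2)] by fastforce
    have "L2norm (\<lambda>x. indicator (Om j) x *\<^sub>R gS x) \<le> 0" by (rule le_of_tendsto[OF bnd dlim])
    hence "Q (\<lambda>x. indicator (Om j) x *\<^sub>R gS x) = 0"
      using L2norm_nonneg[of "\<lambda>x. indicator (Om j) x *\<^sub>R gS x"]
      by (metis L2norm_sq antisym power_zero_numeral)
    hence "AE x in lebesgue. indicator (Om j) x *\<^sub>R gS x = 0" by (rule Q_zero_AE[OF Lind])
    thus "AE x in lebesgue. x \<in> Om j \<longrightarrow> gS x = 0" by eventually_elim (auto simp: indicator_def)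
  qed
  have EQ: "(\<Sum>j\<in>?T. ys j * (LINT x:Om j|lebesgue. gS x \<bullet> h x)) = F v"
    if vh: "H01 \<Omega> v h" "VS Om S h" for v h
  proof -
    have Lh: "L2 h" using vh(1) by (rule H01_L2)
    have hz: "AE x in lebesgue. x \<in> Om j \<longrightarrow> h x = 0" if "j \<in> S" for j using vh(2) that by (simp add: VS_def)
    have eqn: "(\<Sum>j\<in>?T. ys j * (LINT x:Om j|lebesgue. gu (yn n) x \<bullet> h x)) = F v" for n
    proof -
      have "F v = a (yn n) (gu (yn n)) h" by (rule eq[OF pyn vh(1), symmetric])
      also have "\<dots> = (\<Sum>j\<in>?T. yn n j * (LINT x:Om j|lebesgue. gu (yn n) x \<bullet> h x)) + (\<Sum>j\<in>S. yn n j * (LINT x:Om j|lebesgue. gu (yn n) x \<bullet> h x))"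
        unfolding a_def by (rule sum.subset_diff[OF assms(9) fin])
      also have "(\<Sum>j\<in>S. yn n j * (LINT x:Om j|lebesgue. gu (yn n) x \<bullet> h x)) = 0"
        by (rule sum.neutral) (simp add: sint_zero_AE[OF hz])
      also have "(\<Sum>j\<in>?T. yn n j * (LINT x:Om j|lebesgue. gu (yn n) x \<bullet> h x)) = (\<Sum>j\<in>?T. ys j * (LINT x:Om j|lebesgue. gu (yn n) x \<bullet> h x))"
        by (rule sum.cong) (auto simp: yn_def)
      finally show ?thesis by simp
    qed
    let ?c = "(\<Sum>j\<in>?T. ys j * (LINT x:Om j|lebesgue. gS x \<bullet> h x)) - F v"
    let ?K = "(\<Sum>j\<in>?T. ys j) * L2norm h"
    have bnd: "\<bar>?c\<bar> \<le> 0 + ?K * L2norm (\<lambda>x. gu (yn n) x - gS x)" for n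
    proof -
      have "?c = (\<Sum>j\<in>?T. ys j * (LINT x:Om j|lebesgue. gS x \<bullet> h x)) - (\<Sum>j\<in>?T. ys j * (LINT x:Om j|lebesgue. gu (yn n) x \<bullet> h x))"
        using eqn[of n] by simp
      also have "\<dots> = (\<Sum>j\<in>?T. ys j * (LINT x:Om j|lebesgue. (gS x - gu (yn n) x) \<bullet> h x))"
        by (simp add: sum_subtractf[symmetric] right_diff_distrib[symmetric] sint_diff_left[OF gS(1) Lgn Lh Omm])
      finally have "\<bar>?c\<bar> \<le> (\<Sum>j\<in>?T. \<bar>ys j * (LINT x:Om j|lebesgue. (gS x - gu (yn n) x) \<bullet> h x)\<bar>)"
        by (simp add: sum_abs)
      also have "\<dots> \<le> (\<Sum>j\<in>?T. ys j * (L2norm (\<lambda>x. gS x - gu (yn n) x) * L2norm h))"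
      proof (rule sum_mono)
        fix j assume j: "j \<in> ?T"
        have "\<bar>LINT x:Om j|lebesgue. (gS x - gu (yn n) x) \<bullet> h x\<bar> \<le> L2norm (\<lambda>x. gS x - gu (yn n) x) * L2norm h"
          using j by (intro set_CS L2_diff gS(1) Lgn Lh Omm) auto
        show "\<bar>ys j * (LINT x:Om j|lebesgue. (gS x - gu (yn n) x) \<bullet> h x)\<bar> \<le> ys j * (L2norm (\<lambda>x. gS x - gu (yn n) x) * L2norm h)"
        proof -
          have yj: "0 < ys j" using assms(10) j by auto
          hence "\<bar>ys j * (LINT x:Om j|lebesgue. (gS x - gu (yn n) x) \<bullet> h x)\<bar> = ys j * \<bar>LINT x:Om j|lebesgue. (gS x - gu (yn n) x) \<bullet> h x\<bar>"
            by (simp add: abs_mult)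
          also have "\<dots> \<le> ys j * (L2norm (\<lambda>x. gS x - gu (yn n) x) * L2norm h)"
            using yj \<open>\<bar>LINT x:Om j|lebesgue. (gS x - gu (yn n) x) \<bullet> h x\<bar> \<le> L2norm (\<lambda>x. gS x - gu (yn n) x) * L2norm h\<close>
            by (intro mult_left_mono) auto
          finally show ?thesis .
        qed
      qed
      also have "\<dots> = (\<Sum>j\<in>?T. ys j * (L2norm h * L2norm (\<lambda>x. gu (yn n) x - gS x)))"
        by (simp add: L2norm_minus_commute[of gS] mult.commute)
      also have "\<dots> = (\<Sum>j\<in>?T. ys j) * (L2norm h * L2norm (\<lambda>x. gu (yn n) x - gS x))"
        by (rule sum_distrib_right[symmetric])
      also have "\<dots> = ?K * L2norm (\<lambda>x. gu (yn n) x - gS x)" by (simp add: mult.assoc)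
      finally show ?thesis by simp
    qed
    have "(\<lambda>n. ?K * L2norm (\<lambda>x. gu (yn n) x - gS x)) \<longlonglongrightarrow> ?K * 0"
      by (intro tendsto_mult tendsto_const gS(2))
    hence "\<bar>?c\<bar> \<le> 0" using le_of_tendsto[OF bnd] by simp
    thus ?thesis by simp
  qed
  have UNIQ: "L2norm (\<lambda>x. k x - gS x) = 0"
    if wk: "H01 \<Omega> w k" "VS Om S k"
      and eqk: "\<forall>v h. H01 \<Omega> v h \<and> VS Om S h \<longrightarrow> (\<Sum>j\<in>?T. ys j * (LINT x:Om j|lebesgue. k x \<bullet> h x)) = F v"
    for w k
  proof -
    let ?D = "\<lambda>x. k x - gS x"
    have HD: "H01 \<Omega> (\<lambda>x. w x - uS x) ?D" by (rule H01_diff[OF wk(1) HS])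
    have Lk: "L2 k" using wk(1) by (rule H01_L2)
    have LD: "L2 ?D" using HD by (rule H01_L2)
    have VD: "VS Om S ?D" using wk(2) VSg unfolding VS_def
    proof (intro ballI)
      fix j assume "\<forall>j\<in>S. AE x in lebesgue. x \<in> Om j \<longrightarrow> k x = 0" "\<forall>j\<in>S. AE x in lebesgue. x \<in> Om j \<longrightarrow> gS x = 0" "j \<in> S"
      hence "AE x in lebesgue. x \<in> Om j \<longrightarrow> k x = 0" "AE x in lebesgue. x \<in> Om j \<longrightarrow> gS x = 0" by auto
      thus "AE x in lebesgue. x \<in> Om j \<longrightarrow> k x - gS x = 0" by eventually_elim simp
    qed
    have e1: "(\<Sum>j\<in>?T. ys j * (LINT x:Om j|lebesgue. k x \<bullet> ?D x)) = F (\<lambda>x. w x - uS x)"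
      using eqk HD VD by blast
    have e2: "(\<Sum>j\<in>?T. ys j * (LINT x:Om j|lebesgue. gS x \<bullet> ?D x)) = F (\<lambda>x. w x - uS x)"
      by (rule EQ[OF HD VD])
    have s0: "(\<Sum>j\<in>?T. ys j * (LINT x:Om j|lebesgue. ?D x \<bullet> ?D x)) = 0"
    proof -
      have "(\<Sum>j\<in>?T. ys j * (LINT x:Om j|lebesgue. ?D x \<bullet> ?D x))
          = (\<Sum>j\<in>?T. ys j * (LINT x:Om j|lebesgue. k x \<bullet> ?D x)) - (\<Sum>j\<in>?T. ys j * (LINT x:Om j|lebesgue. gS x \<bullet> ?D x))"
        by (simp add: sum_subtractf[symmetric] right_diff_distrib[symmetric] sint_diff_left[OF Lk gS(1) LD Omm])
      thus ?thesis using e1 e2 by simp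
    qed
    have zT: "(LINT x:Om j|lebesgue. ?D x \<bullet> ?D x) = 0" if j: "j \<in> ?T" for j
    proof -
      have nn: "\<forall>j\<in>?T. 0 \<le> ys j * (LINT x:Om j|lebesgue. ?D x \<bullet> ?D x)"
      proof
        fix j assume "j \<in> ?T"
        hence "0 < ys j" using assms(10) by auto
        moreover have "0 \<le> (LINT x:Om j|lebesgue. ?D x \<bullet> ?D x)" by (rule set_Q_nonneg)
        ultimately show "0 \<le> ys j * (LINT x:Om j|lebesgue. ?D x \<bullet> ?D x)" by simp
      qed
      have "\<forall>j\<in>?T. ys j * (LINT x:Om j|lebesgue. ?D x \<bullet> ?D x) = 0"
        using s0 sum_nonneg_eq_0_iff[OF finT, of "\<lambda>j. ys j * (LINT x:Om j|lebesgue. ?D x \<bullet> ?D x)"] nn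
        by blast
      hence "ys j * (LINT x:Om j|lebesgue. ?D x \<bullet> ?D x) = 0" using j by blast
      moreover have "ys j \<noteq> 0" using j assms(10) by force
      ultimately show ?thesis by simp
    qed
    have zS: "(LINT x:Om j|lebesgue. ?D x \<bullet> ?D x) = 0" if j: "j \<in> S" for j
      using VD j by (intro sint_zero_AE) (simp add: VS_def)
    have "Q ?D = (\<integral>x. ?D x \<bullet> ?D x \<partial>lebesgue)" unfolding Q_def by (simp add: power2_norm_eq_inner)
    also have "\<dots> = (\<Sum>j\<in>?I. LINT x:Om j|lebesgue. ?D x \<bullet> ?D x)" by (rule dec[OF LD LD zo[OF HD]])
    also have "\<dots> = 0" by (rule sum.neutral) (use zT zS in blast)
    finally show ?thesis by (simp add: L2norm_Q)
  qed
  have CONV: "\<exists>M>0. \<forall>y. (\<forall>j\<in>?T. y j = ys j) \<and> (\<forall>j\<in>S. y j > M) \<longrightarrow> L2norm (\<lambda>x. gu y x - gS x) < \<epsilon>"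
    if e: "\<epsilon> > 0" for \<epsilon>
  proof -
    obtain M y0 where M: "M \<ge> 1" "adm 1 y0" "\<And>y. adm M y \<Longrightarrow> L2norm (\<lambda>x. gu y x - gu y0 x) \<le> \<epsilon> / 3"
      using KC[of "\<epsilon>/3"] e by auto
    have py0: "pos y0" using adm_pos[OF M(2)] by simp
    have Ly0: "L2 (gu y0)" using sol[OF py0] by (rule H01_L2)
    have b0: "L2norm (\<lambda>x. gu y0 x - gS x) \<le> \<epsilon>/3 + L2norm (\<lambda>x. gu (yn n) x - gS x)" if n: "n \<ge> nat \<lceil>M\<rceil>" for n
    proof -
      have "M \<le> real n" using of_nat_ceiling[of M] of_nat_mono[OF n, where 'a=real] by linarith
      hence an: "adm M (yn n)" by (rule adm_yn)
      have "L2norm (\<lambda>x. gu y0 x - gS x) \<le> L2norm (\<lambda>x. gu y0 x - gu (yn n) x) + L2norm (\<lambda>x. gu (yn n) x - gS x)"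
        by (rule L2norm_diff_triangle[OF Ly0 Lgn gS(1)])
      thus ?thesis using M(3)[OF an] by (simp add: L2norm_minus_commute[of "gu y0"])
    qed
    have y0S: "L2norm (\<lambda>x. gu y0 x - gS x) \<le> \<epsilon>/3" by (rule le_of_tendsto[OF b0 gS(2)])
    show ?thesis
    proof (intro exI[of _ M] conjI allI impI)
      show "M > 0" using M(1) by simp
      fix y assume "(\<forall>j\<in>?T. y j = ys j) \<and> (\<forall>j\<in>S. y j > M)"
      hence ay: "adm M y" by (simp add: adm_def)
      have py: "pos y" using adm_pos[OF ay] M(1) by simp
      have Ly: "L2 (gu y)" using sol[OF py] by (rule H01_L2)
      have "L2norm (\<lambda>x. gu y x - gS x) \<le> L2norm (\<lambda>x. gu y x - gu y0 x) + L2norm (\<lambda>x. gu y0 x - gS x)"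
        by (rule L2norm_diff_triangle[OF Ly Ly0 gS(1)])
      also have "\<dots> \<le> \<epsilon>/3 + \<epsilon>/3" using M(3)[OF ay] y0S by simp
      finally show "L2norm (\<lambda>x. gu y x - gS x) < \<epsilon>" using e by simp
    qed
  qed
  show ?thesis
    apply (rule exI[of _ uS], rule exI[of _ gS])
    apply (intro conjI HS VSg allI impI)
    subgoal for v h using EQ by blast
    subgoal for w k using UNIQ by blast
    subgoal for \<epsilon> using CONV by blast
    done
qed


end
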